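(* Let $1\le k\le n-1$ and let $\lambda$ be the full $k\times(n-k)$ rectangle, i.e. $\lambda_i=n-k$ for $i=1,\dots,k$. Then in the module $M$ one has $X_\lambda\,\mathbf 1=C^J_{w_\lambda}$ (here $w_\lambda$ is the longest element of $W^J$, with $w_\lambda(\mathbf 1)=(-,\dots,-,+,\dots,+)$, $n-k$ minuses followed by $k$ pluses).
   Context: Let $\mathcal H$ be the Hecke algebra of $S_n$ over $\mathbb Q(v)$, generated by $T_1,\dots,T_{n-1}$ subject to the braid relations and $(T_i-v)(T_i+v^{-1})=0$; $T_w$ denotes $T_{i_1}\cdots T_{i_\ell}$ for a reduced expression $w=s_{i_1}\cdots s_{i_\ell}$. The bar involution on $\mathcal H$ is the ring involution with $\overline v=v^{-1}$, $\overline{T_w}=T_{w^{-1}}^{-1}$. Let $E$ be the set of sequences of $n$ signs $\pm$ with exactly $k$ pluses; $S_n$ acts on $E$ by permuting positions. Let $M=\bigoplus_{\varepsilon\in E}\mathbb Q(v)\varepsilon$ with $\mathcal H$-action: $T_i\varepsilon=s_i\varepsilon$ if $(\varepsilon_i,\varepsilon_{i+1})=(+,-)$; $T_i\varepsilon=-v^{-1}\varepsilon$ if $(\varepsilon_i,\varepsilon_{i+1})\in\{(+,+),(-,-)\}$; $T_i\varepsilon=s_i\varepsilon+(v-v^{-1})\varepsilon$ if $(\varepsilon_i,\varepsilon_{i+1})=(-,+)$. Let $\mathbf 1=(+^k,-^{n-k})$; $M$ carries the bar involution $\overline{h\mathbf 1}=\overline h\,\mathbf 1$. $W^J$ denotes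 minimal length representatives of $S_n/(S_k\times S_{n-k})$, and $y\mapsto y(\mathbf 1)$ is a bijection $W^J\to E$. $C^J_y$ ($y\in W^J$) is the unique element of $M$ with $\overline{C^J_y}=C^J_y$ and $C^J_y-y(\mathbf 1)\in\sum_{\varepsilon}v\mathbb Z[v]\varepsilon$. For a Young diagram $\lambda$ with rows $\lambda_1\ge\dots\ge\lambda_\ell>0$ and boxes $(i,j)$, $1\le j\le\lambda_i$: $w_\lambda=P_\ell\cdots P_1$, $P_i=s_{k+\lambda_i-i}s_{k+\lambda_i-i-1}\cdots s_{k+1-i}$; $r_{ij}=\max(r_{i,j+1},r_{i+1,j})+1$ with $r_{ij}=0$ for $(i,j)\notin\lambda$; $[r]=(v^r-v^{-r})/(v-v^{-1})$; $X_\lambda=Q_\ell\cdots Q_1$ with $Q_i=\prod_{j=\lambda_i}^{1}\bigl(T_{k+j-i}-v^{r_{ij}}/[r_{ij}]\bigr)$, factors ordered from $j=\lambda_i$ (leftmost) to $j=1$ (rightmost). *)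

theory Defs
  imports Main "HOL-Computational_Algebra.Polynomial" "HOL-Computational_Algebra.Fraction_Field"
begin

type_synonym qv = "rat poly fract"

definition V :: qv where "V = Fract [:0, 1:] 1"

definition qconst :: "rat \<Rightarrow> qv" where "qconst c = Fract [:c:] 1"

definition subst_inv :: "rat poly \<Rightarrow> qv" where
  "subst_inv p = poly (map_poly qconst p) (inverse V)"

text \<open>Bar involution on Q(v): v \<mapsto> v^{-1}.\<close>
definition barQ :: "qv \<Rightarrow> qv" where
  "barQ x = (SOME y. \<exists>p q. q \<noteq> 0 \<and> x = Fract p q \<and> y = subst_inv p / subst_inv q)"

definition vZv :: "qv set" where
  "vZv = {Fract p 1 | p. (\<forall>i. coeff p i \<in> \<int>) \<and> coeff p 0 = 0}"

definition qint :: "nat \<Rightarrow> qv" where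
  "qint r = (V ^ r - inverse V ^ r) / (V - inverse V)"

text \<open>A sign sequence is a bool list; True = +, False = -. Position i (1-indexed)
  is list index i-1.\<close>
definition Eset :: "nat \<Rightarrow> nat \<Rightarrow> bool list set" where
  "Eset n k = {e. length e = n \<and> length (filter id e) = k}"

definition swp :: "nat \<Rightarrow> bool list \<Rightarrow> bool list" where
  "swp i e = e[i - 1 := e ! i, i := e ! (i - 1)]"

text \<open>Action of a word s_{i_1} ... s_{i_l} (given as list [i_1,...,i_l]) on E:
  the rightmost reflection acts first.\<close>
definition act_word :: "nat list \<Rightarrow> bool list \<Rightarrow> bool list" where
  "act_word ws e = foldr swp ws e"

definition one_seq :: "nat \<Rightarrow> nat \<Rightarrow> bool list" where
  "one_seq n k = replicate k True @ replicate (n - k) False"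

text \<open>Elements of M are coefficient functions E \<rightarrow> Q(v) (zero outside E).\<close>
type_synonym modM = "bool list \<Rightarrow> qv"

definition inM :: "nat \<Rightarrow> nat \<Rightarrow> modM \<Rightarrow> bool" where
  "inM n k m \<longleftrightarrow> (\<forall>e. e \<notin> Eset n k \<longrightarrow> m e = 0)"

definition basis :: "bool list \<Rightarrow> modM" where
  "basis e = (\<lambda>x. if x = e then 1 else 0)"

text \<open>Action of T_i on M, written coordinatewise: it is the linear extension of
  T_i e = s_i e for (+,-), = -v^{-1} e for (+,+),(-,-), = s_i e + (v - v^{-1}) e for (-,+).\<close>
definition Tact :: "nat \<Rightarrow> nat \<Rightarrow> nat \<Rightarrow> modM \<Rightarrow> modM" where
  "Tact n k i m = (\<lambda>x. if x \<notin> Eset n k then 0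
     else if x ! (i - 1) = x ! i then - inverse V * m x
     else if x ! (i - 1) \<and> \<not> x ! i then m (swp i x)
     else m (swp i x) + (V - inverse V) * m x)"

text \<open>Expressions in the generators T_i, their inverses and scalars of Q(v).
  H is the quotient of this free algebra by the Hecke relations; every expression
  acts on M through this quotient.\<close>
datatype hexp = HScal qv | HT nat | HTinv nat | HAdd hexp hexp | HMul hexp hexp

fun gens :: "hexp \<Rightarrow> nat set" where
  "gens (HScal c) = {}"
| "gens (HT i) = {i}"
| "gens (HTinv i) = {i}"
| "gens (HAdd a b) = gens a \<union> gens b"
| "gens (HMul a b) = gens a \<union> gens b"

definition valid_h :: "nat \<Rightarrow> hexp \<Rightarrow> bool" where
  "valid_h n h \<longleftrightarrow> gens h \<subseteq> {1..n - 1}"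

text \<open>Action on M; T_i^{-1} = T_i - (v - v^{-1}) in H by the quadratic relation.\<close>
fun hact :: "nat \<Rightarrow> nat \<Rightarrow> hexp \<Rightarrow> modM \<Rightarrow> modM" where
  "hact n k (HScal c) m = (\<lambda>x. c * m x)"
| "hact n k (HT i) m = Tact n k i m"
| "hact n k (HTinv i) m = (\<lambda>x. Tact n k i m x - (V - inverse V) * m x)"
| "hact n k (HAdd a b) m = (\<lambda>x. hact n k a m x + hact n k b m x)"
| "hact n k (HMul a b) m = hact n k a (hact n k b m)"

fun barH :: "hexp \<Rightarrow> hexp" where
  "barH (HScal c) = HScal (barQ c)"
| "barH (HT i) = HTinv i"
| "barH (HTinv i) = HT i"
| "barH (HAdd a b) = HAdd (barH a) (barH b)"
| "barH (HMul a b) = HMul (barH a) (barH b)"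

definition hprod :: "hexp list \<Rightarrow> hexp" where
  "hprod hs = foldr HMul hs (HScal 1)"

definition barM :: "nat \<Rightarrow> nat \<Rightarrow> modM \<Rightarrow> modM" where
  "barM n k m = (SOME y. \<exists>h. valid_h n h \<and> hact n k h (basis (one_seq n k)) = m
                      \<and> y = hact n k (barH h) (basis (one_seq n k)))"

text \<open>Parabolic KL basis element C^J_y, indexed by e = y(1) \<in> E.\<close>
definition CJ :: "nat \<Rightarrow> nat \<Rightarrow> bool list \<Rightarrow> modM" where
  "CJ n k e = (THE c. inM n k c \<and> barM n k c = c
                 \<and> (\<forall>x \<in> Eset n k. c x - basis e x \<in> vZv))"

text \<open>A Young diagram is the list of its rows [lambda_1, ..., lambda_l];
  boxes (i,j) are 1-indexed.\<close>
definition inYD :: "nat list \<Rightarrow> nat \<Rightarrow> nat \<Rightarrow> bool" where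
  "inYD lam i j \<longleftrightarrow> 1 \<le> i \<and> i \<le> length lam \<and> 1 \<le> j \<and> j \<le> lam ! (i - 1)"

function rr :: "nat list \<Rightarrow> nat \<Rightarrow> nat \<Rightarrow> nat" where
  "rr lam i j = (if inYD lam i j then max (rr lam i (j + 1)) (rr lam (i + 1) j) + 1 else 0)"
  by pat_completeness auto
termination
proof (relation "measure (\<lambda>(lam, i, j). length lam + sum_list lam + 2 - (i + j))")
  show "wf (measure (\<lambda>(lam, i, j). length lam + sum_list lam + 2 - (i + j)))" by simp
next
  fix lam i j
  assume h: "inYD lam i j"
  have "lam ! (i - 1) \<le> sum_list lam"
    using h unfolding inYD_def
    by (metis elem_le_sum_list diff_less le_eq_less_or_eq less_le_trans zero_less_one)
  with h have "i + j + 1 < length lam + sum_list lam + 2" unfolding inYD_def by linarith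
  then show "((lam, i, j + 1), lam, i, j) \<in> measure (\<lambda>(lam, i, j). length lam + sum_list lam + 2 - (i + j))"
    and "((lam, i + 1, j), lam, i, j) \<in> measure (\<lambda>(lam, i, j). length lam + sum_list lam + 2 - (i + j))"
    by auto
qed

declare rr.simps [simp del]

definition Pword :: "nat \<Rightarrow> nat list \<Rightarrow> nat \<Rightarrow> nat list" where
  "Pword k lam i = rev [k + 1 - i ..< k + lam ! (i - 1) + 1 - i]"

definition wword :: "nat \<Rightarrow> nat list \<Rightarrow> nat list" where
  "wword k lam = concat (map (Pword k lam) (rev [1 ..< length lam + 1]))"

definition Qfac :: "nat \<Rightarrow> nat list \<Rightarrow> nat \<Rightarrow> hexp" where
  "Qfac k lam i = hprod (map (\<lambda>j. HAdd (HT (k + j - i))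
        (HScal (- (V ^ rr lam i j / qint (rr lam i j))))) (rev [1 ..< lam ! (i - 1) + 1]))"

definition Xlam :: "nat \<Rightarrow> nat list \<Rightarrow> hexp" where
  "Xlam k lam = hprod (map (Qfac k lam) (rev [1 ..< length lam + 1]))"

end

theory Submission
  imports Defs
begin


definition iota :: "rat poly \<Rightarrow> qv" where "iota p = Fract p 1"

lemma iota_add: "iota (p + q) = iota p + iota q" by (simp add: iota_def)
lemma iota_mult: "iota (p * q) = iota p * iota q" by (simp add: iota_def)
lemma iota_0: "iota 0 = 0" by (simp add: iota_def Zero_fract_def)
lemma iota_1: "iota 1 = 1" by (simp add: iota_def One_fract_def)
lemma iota_inj: "iota p = iota q \<longleftrightarrow> p = q" by (simp add: iota_def eq_fract)
lemma iota_eq0: "iota p = 0 \<longleftrightarrow> p = 0" using iota_inj[of p 0] by (simp add: iota_0)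
lemma iota_minus: "iota (- p) = - iota p" by (simp add: iota_def)
lemma iota_diff: "iota (p - q) = iota p - iota q" by (simp add: iota_def)
lemma iota_power: "iota (p ^ j) = iota p ^ j" by (induct j) (simp_all add: iota_1 iota_mult)

lemma V_iota: "V = iota [:0,1:]" by (simp add: V_def iota_def)
lemma qconst_iota: "qconst c = iota [:c:]" by (simp add: qconst_def iota_def)
lemma qconst_0[simp]: "qconst 0 = 0" by (simp add: qconst_iota iota_0)
lemma qconst_add: "qconst (a + b) = qconst a + qconst b" by (simp add: qconst_iota iota_add[symmetric])
lemma qconst_mult: "qconst (a * b) = qconst a * qconst b" by (simp add: qconst_iota iota_mult[symmetric] ac_simps)
lemma qconst_1: "qconst 1 = 1" by (simp add: qconst_iota iota_1[symmetric] one_pCons)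
lemma qconst_inj: "qconst a = qconst b \<longleftrightarrow> a = b" by (simp add: qconst_iota iota_inj)

lemma V_nz[simp]: "V \<noteq> 0" by (simp add: V_iota iota_eq0)

lemma poly_qconst_V: "poly (map_poly qconst p) V = iota p"
proof (induct p)
  case 0 then show ?case by (simp add: iota_0)
next
  case (pCons a p)
  have "pCons a p = [:a:] + [:0,1:] * p" by simp
  then have "iota (pCons a p) = qconst a + V * iota p"
    by (metis iota_add iota_mult V_iota qconst_iota)
  then show ?case using pCons by (simp add: map_poly_pCons)
qed

definition ww :: qv where "ww = inverse V"

lemma sinv_def2: "subst_inv p = poly (map_poly qconst p) ww" by (simp add: subst_inv_def ww_def)

lemma sinv_pCons: "subst_inv (pCons a p) = qconst a + ww * subst_inv p"
  by (simp add: sinv_def2 map_poly_pCons)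
lemma sinv_0[simp]: "subst_inv 0 = 0" by (simp add: sinv_def2)

lemma sinv_add: "subst_inv (p + q) = subst_inv p + subst_inv q"
proof (induct p q rule: poly_induct2)
  case 0 then show ?case by simp
next
  case (pCons a p b q)
  then show ?case by (simp add: sinv_pCons qconst_add algebra_simps)
qed

lemma sinv_smult: "subst_inv (smult a q) = qconst a * subst_inv q"
  by (induct q) (simp_all add: sinv_pCons qconst_mult algebra_simps)

lemma sinv_mult: "subst_inv (p * q) = subst_inv p * subst_inv q"
proof (induct p)
  case 0 then show ?case by simp
next
  case (pCons a p)
  have "subst_inv (pCons 0 (p * q)) = ww * subst_inv (p * q)" using sinv_pCons[of 0 "p*q"] by simp
  then show ?case using pCons by (simp add: sinv_add sinv_smult sinv_pCons algebra_simps)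
qed

lemma sinv_1: "subst_inv 1 = 1"
  by (simp add: sinv_def2 one_pCons map_poly_pCons qconst_1)

lemma reflect_map_qconst: "reflect_poly (map_poly qconst q) = map_poly qconst (reflect_poly q)"
proof -
  have dg: "degree (map_poly qconst q) = degree q"
    by (rule degree_map_poly) (metis qconst_0 qconst_inj)
  show ?thesis
    by (rule poly_eqI) (simp add: coeff_reflect_poly coeff_map_poly dg)
qed

lemma sinv_nz: "q \<noteq> 0 \<Longrightarrow> subst_inv q \<noteq> 0"
proof
  assume q: "q \<noteq> 0" and s: "subst_inv q = 0"
  have "poly (reflect_poly (map_poly qconst q)) V = V ^ degree (map_poly qconst q) * poly (map_poly qconst q) (inverse V)"
    by (rule poly_reflect_poly_nz) simp
  also have "poly (map_poly qconst q) (inverse V) = 0" using s by (simp add: subst_inv_def)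
  finally have "iota (reflect_poly q) = 0" by (simp add: reflect_map_qconst poly_qconst_V)
  then show False using q by (simp add: iota_eq0)
qed

lemma barQ_Fract: assumes "q \<noteq> 0" shows "barQ (Fract p q) = subst_inv p / subst_inv q"
proof -
  have "\<exists>p' q'. q' \<noteq> 0 \<and> Fract p q = Fract p' q' \<and> subst_inv p / subst_inv q = subst_inv p' / subst_inv q'"
    using assms by (intro exI[of _ p] exI[of _ q]) simp
  moreover have "y = subst_inv p / subst_inv q" if ex: "\<exists>p' q'. q' \<noteq> 0 \<and> Fract p q = Fract p' q' \<and> y = subst_inv p' / subst_inv q'" for y
  proof -
    obtain p' q' where h: "q' \<noteq> 0" "Fract p q = Fract p' q'" "y = subst_inv p' / subst_inv q'" using ex by blast
    have "p * q' = p' * q" using h assms by (simp add: eq_fract)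
    then have "subst_inv p * subst_inv q' = subst_inv p' * subst_inv q" by (metis sinv_mult)
    then show ?thesis unfolding h(3) using sinv_nz[OF h(1)] sinv_nz[OF assms] by (simp add: frac_eq_eq)
  qed
  ultimately show ?thesis unfolding barQ_def by (rule someI2)
qed

lemma barQ_add: "barQ (x + y) = barQ x + barQ y"
proof (cases x; cases y)
  fix a b c d assume x: "x = Fract a b" "b \<noteq> 0" and y: "y = Fract c d" "d \<noteq> 0"
  have e: "x + y = Fract (a * d + c * b) (b * d)" using x y by simp
  have nb: "subst_inv b \<noteq> 0" and nd: "subst_inv d \<noteq> 0" using x y sinv_nz by auto
  have "barQ (x + y) = subst_inv (a * d + c * b) / subst_inv (b * d)"
    unfolding e by (rule barQ_Fract) (simp add: x y)
  also have "\<dots> = (subst_inv a * subst_inv d + subst_inv c * subst_inv b) / (subst_inv b * subst_inv d)"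
    by (simp only: sinv_add sinv_mult)
  also have "\<dots> = subst_inv a / subst_inv b + subst_inv c / subst_inv d"
    using nb nd by (simp add: add_frac_eq)
  finally show ?thesis using x y by (simp add: barQ_Fract)
qed

lemma barQ_mult: "barQ (x * y) = barQ x * barQ y"
proof (cases x; cases y)
  fix a b c d assume x: "x = Fract a b" "b \<noteq> 0" and y: "y = Fract c d" "d \<noteq> 0"
  have e: "x * y = Fract (a * c) (b * d)" using x y by simp
  have "barQ (x * y) = subst_inv (a * c) / subst_inv (b * d)"
    unfolding e by (rule barQ_Fract) (simp add: x y)
  also have "\<dots> = (subst_inv a * subst_inv c) / (subst_inv b * subst_inv d)"
    by (simp only: sinv_mult)
  finally show ?thesis using x y by (simp add: barQ_Fract)
qed

lemma barQ_0[simp]: "barQ 0 = 0"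
proof -
  have "barQ (Fract 0 1) = subst_inv 0 / subst_inv 1" by (rule barQ_Fract) simp
  then show ?thesis by (simp add: Zero_fract_def[symmetric] sinv_1)
qed
lemma barQ_1[simp]: "barQ 1 = 1"
proof -
  have "barQ (Fract 1 1) = subst_inv 1 / subst_inv 1" by (rule barQ_Fract) simp
  then show ?thesis by (simp add: One_fract_def[symmetric] sinv_1)
qed
lemma barQ_minus: "barQ (- x) = - barQ x"
  using barQ_add[of x "-x"] by (simp add: eq_neg_iff_add_eq_0)
lemma barQ_diff: "barQ (x - y) = barQ x - barQ y"
  using barQ_add[of x "-y"] by (simp add: barQ_minus)
lemma barQ_V: "barQ V = inverse V"
proof -
  have "subst_inv [:0,1:] = ww" by (simp add: sinv_def2 map_poly_pCons qconst_1)
  moreover have "barQ (Fract [:0,1:] 1) = subst_inv [:0,1:] / subst_inv 1" by (rule barQ_Fract) simp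
  ultimately show ?thesis by (simp add: V_def sinv_1 ww_def)
qed
lemma barQ_inverse: "barQ (inverse x) = inverse (barQ x)"
proof (cases "x = 0")
  case True then show ?thesis by simp
next
  case False
  obtain a b where x: "x = Fract a b" "b \<noteq> 0" by (cases x)
  have a: "a \<noteq> 0" using x False by (auto simp: eq_fract Zero_fract_def)
  have "barQ (Fract b a) = subst_inv b / subst_inv a" by (rule barQ_Fract) (rule a)
  moreover have "barQ (Fract a b) = subst_inv a / subst_inv b" by (rule barQ_Fract) (rule x(2))
  ultimately show ?thesis using x by simp
qed
lemma barQ_Vinv: "barQ (inverse V) = V" by (simp add: barQ_inverse barQ_V)
lemma barQ_power: "barQ (x ^ j) = barQ x ^ j" by (induct j) (simp_all add: barQ_mult)


definition Rf :: "nat \<Rightarrow> nat \<Rightarrow> nat \<Rightarrow> qv \<Rightarrow> modM \<Rightarrow> modM" where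
  "Rf n k i F m = (\<lambda>x. Tact n k i m x - F * m x)"

lemma swp_at[simp]: "swp (Suc (length xs)) (xs @ a # b # ys) = xs @ b # a # ys"
  by (simp add: swp_def nth_append list_update_append)

lemma Tact_at:
  assumes "i = length xs + 1"
  shows "Tact n k i m (xs @ a # b # ys) = (if xs @ a # b # ys \<notin> Eset n k then 0
     else if a = b then - inverse V * m (xs @ a # b # ys)
     else if a \<and> \<not> b then m (xs @ b # a # ys)
     else m (xs @ b # a # ys) + (V - inverse V) * m (xs @ a # b # ys))"
  using assms by (simp add: Tact_def nth_append)

lemma Tact_at2:
  assumes "i = length xs + 2"
  shows "Tact n k i m (xs @ a # b # c # ys) = (if xs @ a # b # c # ys \<notin> Eset n k then 0
     else if b = c then - inverse V * m (xs @ a # b # c # ys)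
     else if b \<and> \<not> c then m (xs @ a # c # b # ys)
     else m (xs @ a # c # b # ys) + (V - inverse V) * m (xs @ a # b # c # ys))"
  using assms Tact_at[of i "xs @ [a]" n k m b c ys] by simp

lemma Tact_atJ:
  assumes "j = length xs + length zs + 3"
  shows "Tact n k j m (xs @ a # b # zs @ c # d # ys) = (if xs @ a # b # zs @ c # d # ys \<notin> Eset n k then 0
     else if c = d then - inverse V * m (xs @ a # b # zs @ c # d # ys)
     else if c \<and> \<not> d then m (xs @ a # b # zs @ d # c # ys)
     else m (xs @ a # b # zs @ d # c # ys) + (V - inverse V) * m (xs @ a # b # zs @ c # d # ys))"
  using assms Tact_at[of j "xs @ a # b # zs" n k m c d ys] by simp

lemma Tact_out: "x \<notin> Eset n k \<Longrightarrow> Tact n k i m x = 0" by (simp add: Tact_def)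

lemma drop_cons: "p < length x \<Longrightarrow> drop p x = x ! p # drop (Suc p) x"
  by (simp add: Cons_nth_drop_Suc)

lemma split3:
  assumes "length x = n" "1 \<le> i" "i + 2 \<le> n"
  shows "\<exists>xs a b c ys. x = xs @ a # b # c # ys \<and> length xs = i - 1"
proof -
  have s: "Suc (i - 1) = i" using assms by simp
  have "drop (i - 1) x = x ! (i - 1) # x ! i # x ! Suc i # drop (Suc (Suc i)) x"
    using drop_cons[of "i - 1" x] drop_cons[of i x] drop_cons[of "Suc i" x] assms s by simp
  then have "x = take (i - 1) x @ x ! (i - 1) # x ! i # x ! Suc i # drop (Suc (Suc i)) x"
    by (metis append_take_drop_id)
  then show ?thesis using assms by (intro exI[of _ "take (i - 1) x"]) auto
qed

lemma split2:
  assumes "length x = n" "1 \<le> i" "i + 1 \<le> n"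
  shows "\<exists>xs a b ys. x = xs @ a # b # ys \<and> length xs = i - 1"
proof -
  have s: "Suc (i - 1) = i" using assms by simp
  have "drop (i - 1) x = x ! (i - 1) # x ! i # drop (Suc i) x"
    using drop_cons[of "i - 1" x] drop_cons[of i x] assms s by simp
  then have "x = take (i - 1) x @ x ! (i - 1) # x ! i # drop (Suc i) x"
    by (metis append_take_drop_id)
  then show ?thesis using assms by (intro exI[of _ "take (i - 1) x"]) auto
qed

lemma split4:
  assumes "length x = n" "1 \<le> i" "i + 2 \<le> j" "j + 1 \<le> n"
  shows "\<exists>xs a b zs c d ys. x = xs @ a # b # zs @ c # d # ys \<and> length xs = i - 1 \<and> length zs = j - i - 2"
proof -
  have s: "Suc (i - 1) = i" "Suc (j - 1) = j" using assms by simp_all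
  have d1: "drop (i - 1) x = x ! (i - 1) # x ! i # drop (Suc i) x"
    using drop_cons[of "i - 1" x] drop_cons[of i x] assms s by simp
  have d2: "drop (j - i - 2) (drop (Suc i) x) = x ! (j - 1) # x ! j # drop (Suc j) x"
  proof -
    have e: "j - i - 2 + Suc i = j - 1" using assms by linarith
    have "drop (j - i - 2) (drop (Suc i) x) = drop (j - i - 2 + Suc i) x" by (simp only: drop_drop)
    then have "drop (j - i - 2) (drop (Suc i) x) = drop (j - 1) x" unfolding e .
    then show ?thesis using drop_cons[of "j - 1" x] drop_cons[of j x] assms s by simp
  qed
  have "x = take (i - 1) x @ drop (i - 1) x" by simp
  also have "\<dots> = take (i - 1) x @ x ! (i - 1) # x ! i # (take (j - i - 2) (drop (Suc i) x) @ drop (j - i - 2) (drop (Suc i) x))"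
    unfolding d1 by (simp only: append_take_drop_id)
  also have "\<dots> = take (i - 1) x @ x ! (i - 1) # x ! i # take (j - i - 2) (drop (Suc i) x) @ x ! (j - 1) # x ! j # drop (Suc j) x"
    unfolding d2 by simp
  finally have eq: "x = take (i - 1) x @ x ! (i - 1) # x ! i # take (j - i - 2) (drop (Suc i) x) @ x ! (j - 1) # x ! j # drop (Suc j) x" .
  show ?thesis
    apply (rule exI[of _ "take (i-1) x"], rule exI[of _ "x!(i-1)"], rule exI[of _ "x!i"], rule exI[of _ "take (j-i-2) (drop (Suc i) x)"], rule exI[of _ "x!(j-1)"], rule exI[of _ "x!j"], rule exI[of _ "drop (Suc j) x"])
    using eq assms by simp
qed

lemma ybe_c0: "- (ww * (- (ww * (- (ww * m (xs @ True # True # True # ys)) - F2 * m (xs @ True # True # True # ys))) - F3 * (- (ww * m (xs @ True # True # True # ys)) - F2 * m (xs @ True # True # True # ys)))) - F1 * (- (ww * (- (ww * m (xs @ True # True # True # ys)) - F2 * m (xs @ True # True # True # ys))) - F3 * (- (ww * m (xs @ True # True # True # ys)) - F2 * m (xs @ True # True # True # ys))) = - (ww * (- (ww * (- (ww * m (xs @ True # True # True # ys)) - F1 * m (xs @ True # True # True # ys))) - F3 * (- (ww * m (xs @ True # True # True # ys)) - F1 * m (xs @ True # True # True # ys)))) - F2 * (- (ww * (- (ww * m (xs @ True # True # True # ys)) - F1 * m (xs @ True # True # True # ys))) - F3 * (- (ww * m (xs @ True # True # True # ys)) - F1 * m (xs @ True # True # True # ys)))" by algebra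
lemma ybe_c1: "F3 * (F1 + F2 - (V - ww)) = F1 * F2 \<Longrightarrow> V * ww = 1 \<Longrightarrow> - (ww * (m (xs @ False # True # True # ys) - F2 * m (xs @ True # False # True # ys) - F3 * (- (ww * m (xs @ True # True # False # ys)) - F2 * m (xs @ True # True # False # ys)))) - F1 * (m (xs @ False # True # True # ys) - F2 * m (xs @ True # False # True # ys) - F3 * (- (ww * m (xs @ True # True # False # ys)) - F2 * m (xs @ True # True # False # ys))) = - (ww * m (xs @ False # True # True # ys)) - F1 * m (xs @ False # True # True # ys) - F3 * (m (xs @ True # True # False # ys) + (V - ww) * m (xs @ True # False # True # ys) - F1 * m (xs @ True # False # True # ys)) - F2 * (- (ww * (m (xs @ True # False # True # ys) - F1 * m (xs @ True # True # False # ys))) - F3 * (m (xs @ True # False # True # ys) - F1 * m (xs @ True # True # False # ys)))" by algebra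
lemma ybe_c2: "F3 * (F1 + F2 - (V - ww)) = F1 * F2 \<Longrightarrow> V * ww = 1 \<Longrightarrow> - (ww * (m (xs @ True # False # True # ys) + (V - ww) * m (xs @ False # True # True # ys) - F2 * m (xs @ False # True # True # ys))) - F3 * (m (xs @ True # False # True # ys) + (V - ww) * m (xs @ False # True # True # ys) - F2 * m (xs @ False # True # True # ys)) - F1 * (- (ww * m (xs @ True # True # False # ys)) - F2 * m (xs @ True # True # False # ys) + (V - ww) * (m (xs @ False # True # True # ys) - F2 * m (xs @ True # False # True # ys)) - F3 * (m (xs @ False # True # True # ys) - F2 * m (xs @ True # False # True # ys))) = - (ww * (m (xs @ True # False # True # ys) - F1 * m (xs @ True # True # False # ys))) - F3 * (m (xs @ True # False # True # ys) - F1 * m (xs @ True # True # False # ys)) + (V - ww) * (- (ww * m (xs @ False # True # True # ys)) - F1 * m (xs @ False # True # True # ys) - F3 * (m (xs @ True # True # False # ys) + (V - ww) * m (xs @ True # False # True # ys) - F1 * m (xs @ True # False # True # ys))) - F2 * (- (ww * m (xs @ False # True # True # ys)) - F1 * m (xs @ False # True # True # ys) - F3 * (m (xs @ True # True # False # ys) + (V - ww) * m (xs @ True # False # True # ys) - F1 * m (xs @ True # False # True # ys)))" by algebra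
lemma ybe_c3: "F3 * (F1 + F2 - (V - ww)) = F1 * F2 \<Longrightarrow> V * ww = 1 \<Longrightarrow> - (ww * m (xs @ False # False # True # ys)) - F2 * m (xs @ False # False # True # ys) - F3 * (m (xs @ True # False # False # ys) + (V - ww) * m (xs @ False # True # False # ys) - F2 * m (xs @ False # True # False # ys)) - F1 * (- (ww * (m (xs @ False # True # False # ys) - F2 * m (xs @ True # False # False # ys))) - F3 * (m (xs @ False # True # False # ys) - F2 * m (xs @ True # False # False # ys))) = - (ww * (m (xs @ False # False # True # ys) - F1 * m (xs @ False # True # False # ys) - F3 * (- (ww * m (xs @ True # False # False # ys)) - F1 * m (xs @ True # False # False # ys)))) - F2 * (m (xs @ False # False # True # ys) - F1 * m (xs @ False # True # False # ys) - F3 * (- (ww * m (xs @ True # False # False # ys)) - F1 * m (xs @ True # False # False # ys)))" by algebra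
lemma ybe_c4: "F3 * (F1 + F2 - (V - ww)) = F1 * F2 \<Longrightarrow> V * ww = 1 \<Longrightarrow> - (ww * m (xs @ True # True # False # ys)) - F2 * m (xs @ True # True # False # ys) + (V - ww) * (m (xs @ False # True # True # ys) - F2 * m (xs @ True # False # True # ys)) - F3 * (m (xs @ False # True # True # ys) - F2 * m (xs @ True # False # True # ys)) + (V - ww) * (- (ww * (m (xs @ True # False # True # ys) + (V - ww) * m (xs @ False # True # True # ys) - F2 * m (xs @ False # True # True # ys))) - F3 * (m (xs @ True # False # True # ys) + (V - ww) * m (xs @ False # True # True # ys) - F2 * m (xs @ False # True # True # ys))) - F1 * (- (ww * (m (xs @ True # False # True # ys) + (V - ww) * m (xs @ False # True # True # ys) - F2 * m (xs @ False # True # True # ys))) - F3 * (m (xs @ True # False # True # ys) + (V - ww) * m (xs @ False # True # True # ys) - F2 * m (xs @ False # True # True # ys))) = - (ww * (m (xs @ True # True # False # ys) + (V - ww) * m (xs @ True # False # True # ys) - F1 * m (xs @ True # False # True # ys) + (V - ww) * (- (ww * m (xs @ False # True # True # ys)) - F1 * m (xs @ False # True # True # ys)) - F3 * (- (ww * m (xs @ False # True # True # ys)) - F1 * m (xs @ False # True # True # ys)))) - F2 * (m (xs @ True # True # False # ys) + (V - ww) * m (xs @ True # False # True # ys) - F1 * m (xs @ True # False # True # ys) + (V - ww) * (- (ww * m (xs @ False # True # True # ys)) - F1 * m (xs @ False # True # True # ys)) - F3 * (- (ww * m (xs @ False # True # True # ys)) - F1 * m (xs @ False # True # True # ys)))"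 by algebra
lemma ybe_c5: "F3 * (F1 + F2 - (V - ww)) = F1 * F2 \<Longrightarrow> V * ww = 1 \<Longrightarrow> - (ww * (m (xs @ False # True # False # ys) - F2 * m (xs @ True # False # False # ys))) - F3 * (m (xs @ False # True # False # ys) - F2 * m (xs @ True # False # False # ys)) + (V - ww) * (- (ww * m (xs @ False # False # True # ys)) - F2 * m (xs @ False # False # True # ys) - F3 * (m (xs @ True # False # False # ys) + (V - ww) * m (xs @ False # True # False # ys) - F2 * m (xs @ False # True # False # ys))) - F1 * (- (ww * m (xs @ False # False # True # ys)) - F2 * m (xs @ False # False # True # ys) - F3 * (m (xs @ True # False # False # ys) + (V - ww) * m (xs @ False # True # False # ys) - F2 * m (xs @ False # True # False # ys))) = - (ww * (m (xs @ False # True # False # ys) + (V - ww) * m (xs @ False # False # True # ys) - F1 * m (xs @ False # False # True # ys))) - F3 * (m (xs @ False # True # False # ys) + (V - ww) * m (xs @ False # False # True # ys) - F1 * m (xs @ False # False # True # ys)) - F2 * (- (ww * m (xs @ True # False # False # ys)) - F1 * m (xs @ True # False # False # ys) + (V - ww) * (m (xs @ False # False # True # ys) - F1 * m (xs @ False # True # False # ys)) - F3 * (m (xs @ False # False # True # ys) - F1 * m (xs @ False # True # False # ys)))" by algebra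
lemma ybe_c6: "F3 * (F1 + F2 - (V - ww)) = F1 * F2 \<Longrightarrow> V * ww = 1 \<Longrightarrow> - (ww * (m (xs @ True # False # False # ys) + (V - ww) * m (xs @ False # True # False # ys) - F2 * m (xs @ False # True # False # ys) + (V - ww) * (- (ww * m (xs @ False # False # True # ys)) - F2 * m (xs @ False # False # True # ys)) - F3 * (- (ww * m (xs @ False # False # True # ys)) - F2 * m (xs @ False # False # True # ys)))) - F1 * (m (xs @ True # False # False # ys) + (V - ww) * m (xs @ False # True # False # ys) - F2 * m (xs @ False # True # False # ys) + (V - ww) * (- (ww * m (xs @ False # False # True # ys)) - F2 * m (xs @ False # False # True # ys)) - F3 * (- (ww * m (xs @ False # False # True # ys)) - F2 * m (xs @ False # False # True # ys))) = - (ww * m (xs @ True # False # False # ys)) - F1 * m (xs @ True # False # False # ys) + (V - ww) * (m (xs @ False # False # True # ys) - F1 * m (xs @ False # True # False # ys)) - F3 * (m (xs @ False # False # True # ys) - F1 * m (xs @ False # True # False # ys)) + (V - ww) * (- (ww * (m (xs @ False # True # False # ys) + (V - ww) * m (xs @ False # False # True # ys) - F1 * m (xs @ False # False # True # ys))) - F3 * (m (xs @ False # True # False # ys) + (V - ww) * m (xs @ False # False # True # ys) - F1 * m (xs @ False # False # True # ys))) - F2 * (- (ww * (m (xs @ False # True # False # ys) + (V - ww) * m (xs @ False # False # True # ys) - F1 * m (xs @ False # False # True # ys))) - F3 * (m (xs @ False # True # False # ys) + (V - ww) * m (xs @ False # False # True # ys) - F1 * m (xs @ False # False # True # ys)))"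 by algebra
lemma ybe_c7: "- (ww * (- (ww * (- (ww * m (xs @ False # False # False # ys)) - F2 * m (xs @ False # False # False # ys))) - F3 * (- (ww * m (xs @ False # False # False # ys)) - F2 * m (xs @ False # False # False # ys)))) - F1 * (- (ww * (- (ww * m (xs @ False # False # False # ys)) - F2 * m (xs @ False # False # False # ys))) - F3 * (- (ww * m (xs @ False # False # False # ys)) - F2 * m (xs @ False # False # False # ys))) = - (ww * (- (ww * (- (ww * m (xs @ False # False # False # ys)) - F1 * m (xs @ False # False # False # ys))) - F3 * (- (ww * m (xs @ False # False # False # ys)) - F1 * m (xs @ False # False # False # ys)))) - F2 * (- (ww * (- (ww * m (xs @ False # False # False # ys)) - F1 * m (xs @ False # False # False # ys))) - F3 * (- (ww * m (xs @ False # False # False # ys)) - F1 * m (xs @ False # False # False # ys)))" by algebra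

lemma mem_perm3: "xs @ a # b # c # ys \<in> Eset n k \<Longrightarrow> length (filter id [a',b',c']) = length (filter id [a,b,c]) \<Longrightarrow> xs @ a' # b' # c' # ys \<in> Eset n k"
  by (cases a; cases b; cases c; cases a'; cases b'; cases c'; simp add: Eset_def)

lemma ybe_gen:
  assumes rel: "F3 * (F1 + F2 - (V - inverse V)) = F1 * F2" and i: "1 \<le> i" "i + 2 \<le> n"
  shows "Rf n k i F1 (Rf n k (i+1) F3 (Rf n k i F2 m)) = Rf n k (i+1) F2 (Rf n k i F3 (Rf n k (i+1) F1 m))"
proof
  fix x
  have vw: "V * ww = 1" by (simp add: ww_def)
  have rel': "F3 * (F1 + F2 - (V - ww)) = F1 * F2" using rel by (simp add: ww_def)
  show "Rf n k i F1 (Rf n k (i+1) F3 (Rf n k i F2 m)) x = Rf n k (i+1) F2 (Rf n k i F3 (Rf n k (i+1) F1 m)) x"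
  proof (cases "x \<in> Eset n k")
    case False then show ?thesis by (simp add: Rf_def Tact_out)
  next
    case True
    then have "length x = n" by (simp add: Eset_def)
    then obtain xs a b c ys where x: "x = xs @ a # b # c # ys" and l: "length xs = i - 1"
      using split3 i by blast
    have i1: "i = length xs + 1" and i2: "i + 1 = length xs + 2" using l i by auto
    have mE: "\<And>a' b' c'. length (filter id [a',b',c']) = length (filter id [a,b,c]) \<Longrightarrow> xs @ a' # b' # c' # ys \<in> Eset n k"
      using True unfolding x by (rule mem_perm3)
    show ?thesis unfolding x Rf_def
      apply (simp only: Tact_at[OF i1] Tact_at2[OF i2])
      apply (cases a; cases b; cases c)
      apply (simp_all add: mE ww_def[symmetric])
      subgoal by ((thin_tac a | thin_tac "\<not> a"), (thin_tac b | thin_tac "\<not> b"), (thin_tac c | thin_tac "\<not> c")) (rule ybe_c0)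
      subgoal by ((thin_tac a | thin_tac "\<not> a"), (thin_tac b | thin_tac "\<not> b"), (thin_tac c | thin_tac "\<not> c")) (rule ybe_c1[OF rel' vw])
      subgoal by ((thin_tac a | thin_tac "\<not> a"), (thin_tac b | thin_tac "\<not> b"), (thin_tac c | thin_tac "\<not> c")) (rule ybe_c2[OF rel' vw])
      subgoal by ((thin_tac a | thin_tac "\<not> a"), (thin_tac b | thin_tac "\<not> b"), (thin_tac c | thin_tac "\<not> c")) (rule ybe_c3[OF rel' vw])
      subgoal by ((thin_tac a | thin_tac "\<not> a"), (thin_tac b | thin_tac "\<not> b"), (thin_tac c | thin_tac "\<not> c")) (rule ybe_c4[OF rel' vw])
      subgoal by ((thin_tac a | thin_tac "\<not> a"), (thin_tac b | thin_tac "\<not> b"), (thin_tac c | thin_tac "\<not> c")) (rule ybe_c5[OF rel' vw])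
      subgoal by ((thin_tac a | thin_tac "\<not> a"), (thin_tac b | thin_tac "\<not> b"), (thin_tac c | thin_tac "\<not> c")) (rule ybe_c6[OF rel' vw])
      subgoal by ((thin_tac a | thin_tac "\<not> a"), (thin_tac b | thin_tac "\<not> b"), (thin_tac c | thin_tac "\<not> c")) (rule ybe_c7)
      done
  qed
qed


lemma length_swp[simp]: "length (swp i x) = length x" by (simp add: swp_def)

lemma Eset_len: "x \<in> Eset n k \<Longrightarrow> length x = n" by (simp add: Eset_def)

lemma swp_E: assumes "x \<in> Eset n k" "1 \<le> i" "i + 1 \<le> n" shows "swp i x \<in> Eset n k"
proof -
  obtain xs a b ys where x: "x = xs @ a # b # ys" "length xs = i - 1"
    using split2[OF Eset_len[OF assms(1)] assms(2,3)] by blast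
  have i: "i = Suc (length xs)" using x assms by simp
  show ?thesis using assms(1) unfolding x(1) i by (cases a; cases b) (simp_all add: Eset_def)
qed

lemma swp_swp: assumes "1 \<le> i" "i + 1 \<le> length x" shows "swp i (swp i x) = x"
proof -
  obtain xs a b ys where x: "x = xs @ a # b # ys" "length xs = i - 1"
    using split2[OF refl assms] by blast
  have i: "i = Suc (length xs)" using x assms by simp
  show ?thesis unfolding x(1) i by simp
qed

lemma swp_same: assumes "1 \<le> i" "i + 1 \<le> length x" "x ! (i - 1) = x ! i" shows "swp i x = x"
proof -
  have "x[i - 1 := x ! i] = x" using list_update_id[of x "i - 1"] assms(3) by (simp del: list_update_id)
  then show ?thesis using assms(3) by (simp add: swp_def)
qed

text \<open>potential: sum of positions of pluses\<close>
fun phi :: "bool list \<Rightarrow> nat" where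
  "phi [] = 0"
| "phi (b # xs) = phi xs + length (filter id xs)"

lemma phi_append: "phi (xs @ ys) = phi xs + phi ys + length xs * length (filter id ys)"
  by (induct xs) (auto simp: id_def)

lemma phi_FT: "phi (xs @ False # True # ys) = Suc (phi (xs @ True # False # ys))"
  by (simp add: phi_append)

lemma Tact_lin: "Tact n k i (\<lambda>x. a x + c * b x) = (\<lambda>x. Tact n k i a x + c * Tact n k i b x)"
  by (rule ext) (simp add: Tact_def algebra_simps)

lemma Rf_lin: "Rf n k i F (\<lambda>x. a x + c * b x) = (\<lambda>x. Rf n k i F a x + c * Rf n k i F b x)"
  by (rule ext) (simp add: Rf_def Tact_def algebra_simps)

lemma Rf_0: "Rf n k i 0 m = Tact n k i m" by (simp add: Rf_def)

lemma inM_Tact: "inM n k (Tact n k i m)" by (simp add: inM_def Tact_def)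
lemma inM_Rf: "inM n k m \<Longrightarrow> inM n k (Rf n k i F m)" by (simp add: inM_def Rf_def Tact_def)

lemma mem_perm4: "xs @ a # b # zs @ c # d # ys \<in> Eset n k \<Longrightarrow> length (filter id [a',b']) = length (filter id [a,b])
  \<Longrightarrow> length (filter id [c',d']) = length (filter id [c,d]) \<Longrightarrow> xs @ a' # b' # zs @ c' # d' # ys \<in> Eset n k"
  by (cases a; cases b; cases c; cases d; cases a'; cases b'; cases c'; cases d'; simp add: Eset_def)

lemma Rf_comm:
  assumes "1 \<le> i" "i + 2 \<le> j" "j + 1 \<le> n"
  shows "Rf n k i F (Rf n k j G m) = Rf n k j G (Rf n k i F m)"
proof
  fix x
  show "Rf n k i F (Rf n k j G m) x = Rf n k j G (Rf n k i F m) x"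
  proof (cases "x \<in> Eset n k")
    case False then show ?thesis by (simp add: Rf_def Tact_out algebra_simps)
  next
    case True
    obtain xs a b zs c d ys where x: "x = xs @ a # b # zs @ c # d # ys" "length xs = i - 1" "length zs = j - i - 2"
      using split4[OF Eset_len[OF True] assms] by blast
    have i1: "i = length xs + 1" and j1: "j = length xs + length zs + 3" using x assms by auto
    have mE: "\<And>a' b' c' d'. length (filter id [a',b']) = length (filter id [a,b]) \<Longrightarrow> length (filter id [c',d']) = length (filter id [c,d]) \<Longrightarrow> xs @ a' # b' # zs @ c' # d' # ys \<in> Eset n k"
      using True unfolding x by (rule mem_perm4)
    show ?thesis unfolding x(1) Rf_def
      apply (simp only: Tact_at[OF i1] Tact_atJ[OF j1])
      apply (cases a; cases b; cases c; cases d)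
      apply (simp_all add: mE algebra_simps)
      done
  qed
qed


locale bfam =
  fixes G :: "nat \<Rightarrow> modM \<Rightarrow> modM" and N :: nat
  assumes braid: "1 \<le> i \<Longrightarrow> i + 1 \<le> N \<Longrightarrow> G i (G (i+1) (G i u)) = G (i+1) (G i (G (i+1) u))"
    and comm: "1 \<le> i \<Longrightarrow> i + 2 \<le> j \<Longrightarrow> j \<le> N \<Longrightarrow> G i (G j u) = G j (G i u)"
    and lin: "G i (\<lambda>x. a x + c * b x) = (\<lambda>x. G i a x + c * G i b x)"
begin

fun Dg :: "nat \<Rightarrow> modM \<Rightarrow> modM" where
  "Dg 0 u = u" | "Dg (Suc m) u = Dg m (G (Suc m) u)"
fun Cg :: "nat \<Rightarrow> modM \<Rightarrow> modM" where
  "Cg 0 u = u" | "Cg (Suc m) u = G (Suc m) (Cg m u)"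
fun Wg :: "nat \<Rightarrow> modM \<Rightarrow> modM" where
  "Wg 0 u = u" | "Wg (Suc m) u = Dg (Suc m) (Wg m u)"

lemma D_comm: "m + 2 \<le> j \<Longrightarrow> j \<le> N \<Longrightarrow> G j (Dg m u) = Dg m (G j u)"
proof (induct m arbitrary: u)
  case 0 then show ?case by simp
next
  case (Suc m)
  have "G j (Dg (Suc m) u) = Dg m (G j (G (Suc m) u))" using Suc by simp
  also have "G j (G (Suc m) u) = G (Suc m) (G j u)" using Suc by (intro comm[symmetric]) auto
  finally show ?case by simp
qed

lemma C_comm: "m + 2 \<le> j \<Longrightarrow> j \<le> N \<Longrightarrow> G j (Cg m u) = Cg m (G j u)"
proof (induct m arbitrary: u)
  case 0 then show ?case by simp
next
  case (Suc m)
  have "G j (Cg (Suc m) u) = G j (G (Suc m) (Cg m u))" by simp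
  also have "\<dots> = G (Suc m) (G j (Cg m u))" using Suc by (intro comm[symmetric]) auto
  also have "G j (Cg m u) = Cg m (G j u)" using Suc by simp
  finally show ?case by simp
qed

lemma W_comm: "m + 2 \<le> j \<Longrightarrow> j \<le> N \<Longrightarrow> G j (Wg m u) = Wg m (G j u)"
proof (induct m arbitrary: u)
  case 0 then show ?case by simp
next
  case (Suc m)
  have "G j (Wg (Suc m) u) = G j (Dg (Suc m) (Wg m u))" by simp
  also have "\<dots> = Dg (Suc m) (G j (Wg m u))" by (rule D_comm) (use Suc in auto)
  also have "G j (Wg m u) = Wg m (G j u)" using Suc by simp
  finally show ?case by simp
qed

lemma C_conj: "2 \<le> i \<Longrightarrow> i \<le> m \<Longrightarrow> m \<le> N \<Longrightarrow> Cg m (G i u) = G (i - 1) (Cg m u)"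
proof (induct m arbitrary: u)
  case 0 then show ?case by simp
next
  case (Suc m)
  show ?case
  proof (cases "i \<le> m")
    case True
    have "Cg (Suc m) (G i u) = G (Suc m) (G (i - 1) (Cg m u))" using Suc True by simp
    also have "\<dots> = G (i - 1) (G (Suc m) (Cg m u))" using Suc True by (intro comm[symmetric]) auto
    finally show ?thesis by simp
  next
    case False
    then have i: "i = Suc m" using Suc by simp
    then obtain m' where m: "m = Suc m'" using Suc by (cases m) auto
    have "Cg (Suc m) (G i u) = G (Suc m) (G m (Cg m' (G (Suc m) u)))" using i m by simp
    also have "Cg m' (G (Suc m) u) = G (Suc m) (Cg m' u)" using C_comm[of m' "Suc m" u] m Suc by simp
    also have "G (Suc m) (G m (G (Suc m) (Cg m' u))) = G m (G (Suc m) (G m (Cg m' u)))"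
      using braid[of m "Cg m' u"] m Suc by simp
    finally show ?thesis using i m by simp
  qed
qed

lemma D_conj: "1 \<le> i \<Longrightarrow> i + 1 \<le> m \<Longrightarrow> m \<le> N \<Longrightarrow> Dg m (G i u) = G (i + 1) (Dg m u)"
proof (induct m arbitrary: u)
  case 0 then show ?case by simp
next
  case (Suc m)
  show ?case
  proof (cases "i + 1 \<le> m")
    case True
    have "Dg (Suc m) (G i u) = Dg m (G (Suc m) (G i u))" by simp
    also have "G (Suc m) (G i u) = G i (G (Suc m) u)" using Suc True by (intro comm[symmetric]) auto
    also have "Dg m (G i (G (Suc m) u)) = G (i + 1) (Dg m (G (Suc m) u))" using Suc True by simp
    finally show ?thesis by simp
  next
    case False
    then have i: "i = m" using Suc by simp
    then obtain m' where m: "m = Suc m'" using Suc by (cases m) auto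
    have "Dg (Suc m) (G i u) = Dg m' (G m (G (Suc m) (G m u)))" using i m by simp
    also have "G m (G (Suc m) (G m u)) = G (Suc m) (G m (G (Suc m) u))" using braid[of m u] m Suc by simp
    also have "Dg m' (G (Suc m) (G m (G (Suc m) u))) = G (Suc m) (Dg m' (G m (G (Suc m) u)))"
      using D_comm[of m' "Suc m"] m Suc by simp
    finally show ?thesis using i m by simp
  qed
qed

lemma W_C: "1 \<le> m \<Longrightarrow> m \<le> N \<Longrightarrow> Wg m u = Wg (m - 1) (Cg m u)"
proof (induct m arbitrary: u)
  case 0 then show ?case by simp
next
  case (Suc m)
  show ?case
  proof (cases "m = 0")
    case True then show ?thesis by simp
  next
    case False
    then obtain m' where m: "m = Suc m'" by (cases m) auto
    have "Wg (Suc m) u = Dg m (G (Suc m) (Wg m u))" by simp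
    also have "Wg m u = Wg m' (Cg m u)" using Suc m by simp
    also have "G (Suc m) (Wg m' (Cg m u)) = Wg m' (G (Suc m) (Cg m u))" using W_comm[of m' "Suc m"] m Suc by simp
    finally show ?thesis using m by simp
  qed
qed

lemma W_conj: "1 \<le> i \<Longrightarrow> i \<le> m \<Longrightarrow> m \<le> N \<Longrightarrow> Wg m (G i u) = G (m + 1 - i) (Wg m u)"
proof (induct m arbitrary: i u)
  case 0 then show ?case by simp
next
  case (Suc m)
  show ?case
  proof (cases "i = 1")
    case True
    show ?thesis
    proof (cases "m = 0")
      case True then show ?thesis using \<open>i = 1\<close> by simp
    next
      case False
      have "Wg (Suc m) (G i u) = Dg (Suc m) (Wg m (G 1 u))" using \<open>i = 1\<close> by simp
      also have "Wg m (G 1 u) = G m (Wg m u)" using Suc False by simp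
      also have "Dg (Suc m) (G m (Wg m u)) = G (Suc m) (Dg (Suc m) (Wg m u))" using D_conj[of m "Suc m"] Suc False by simp
      finally show ?thesis using \<open>i = 1\<close> by simp
    qed
  next
    case False
    have "Wg (Suc m) (G i u) = Wg m (Cg (Suc m) (G i u))" using W_C[of "Suc m"] Suc by simp
    also have "Cg (Suc m) (G i u) = G (i - 1) (Cg (Suc m) u)" using C_conj[of i "Suc m"] Suc False by simp
    also have "Wg m (G (i - 1) (Cg (Suc m) u)) = G (m + 1 - (i - 1)) (Wg m (Cg (Suc m) u))" using Suc False by simp
    also have "Wg m (Cg (Suc m) u) = Wg (Suc m) u" using W_C[of "Suc m"] Suc by simp
    finally show ?thesis using Suc False by simp
  qed
qed

lemma G_zero: "G i (\<lambda>x. 0) = (\<lambda>x. 0)"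
proof -
  have "G i (\<lambda>x. (0::qv) + (-1) * 0) = (\<lambda>x. G i (\<lambda>x. 0) x + (-1) * G i (\<lambda>x. 0) x)" by (rule lin)
  then show ?thesis by simp
qed

lemma D_lin: "Dg m (\<lambda>x. a x + c * b x) = (\<lambda>x. Dg m a x + c * Dg m b x)"
  by (induct m arbitrary: a b) (simp_all add: lin)

lemma W_lin: "Wg m (\<lambda>x. a x + c * b x) = (\<lambda>x. Wg m a x + c * Wg m b x)"
  by (induct m arbitrary: a b) (simp_all add: D_lin)

lemma D_zero: "Dg m (\<lambda>x. 0) = (\<lambda>x. 0)"
  by (induct m) (simp_all add: G_zero)

lemma W_zero: "Wg m (\<lambda>x. 0) = (\<lambda>x. 0)"
  by (induct m) (simp_all add: D_zero)

lemma D_scale: "Dg m (\<lambda>x. c * b x) = (\<lambda>x. c * Dg m b x)"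
  using D_lin[of m "\<lambda>x. 0" c b] by (simp add: D_zero)

lemma W_scale: "Wg m (\<lambda>x. c * b x) = (\<lambda>x. c * Wg m b x)"
  using W_lin[of m "\<lambda>x. 0" c b] by (simp add: W_zero)

lemma W_add: "Wg m (\<lambda>x. a x + b x) = (\<lambda>x. Wg m a x + Wg m b x)"
  using W_lin[of m a 1 b] by simp

end


abbreviation qq :: qv where "qq \<equiv> V - inverse V"

lemma bfam_T: "bfam (\<lambda>i. Rf n k i qq) (n - 1)"
proof
  fix i u assume "1 \<le> i" "i + 1 \<le> n - 1"
  then show "Rf n k i qq (Rf n k (i + 1) qq (Rf n k i qq u)) = Rf n k (i + 1) qq (Rf n k i qq (Rf n k (i + 1) qq u))"
    by (intro ybe_gen) auto
next
  fix i j u assume "1 \<le> i" "i + 2 \<le> j" "j \<le> n - 1"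
  then show "Rf n k i qq (Rf n k j qq u) = Rf n k j qq (Rf n k i qq u)" by (intro Rf_comm) auto
next
  fix i a c b show "Rf n k i qq (\<lambda>x. a x + c * b x) = (\<lambda>x. Rf n k i qq a x + c * Rf n k i qq b x)" by (rule Rf_lin)
qed

definition sig :: "nat \<Rightarrow> nat \<Rightarrow> modM \<Rightarrow> modM" where
  "sig n k m = (\<lambda>x. if x \<in> Eset n k then barQ (m (rev x)) else 0)"

lemma rev_E[simp]: "rev x \<in> Eset n k \<longleftrightarrow> x \<in> Eset n k"
  by (simp add: Eset_def rev_filter[symmetric])

lemma mem_perm2: "xs @ a # b # ys \<in> Eset n k \<Longrightarrow> length (filter id [a',b']) = length (filter id [a,b]) \<Longrightarrow> xs @ a' # b' # ys \<in> Eset n k"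
  by (cases a; cases b; cases a'; cases b'; simp add: Eset_def)

lemmas barQ_simps = barQ_mult barQ_add barQ_minus barQ_diff barQ_V barQ_Vinv

lemma sig_Tact:
  assumes "1 \<le> i" "i + 1 \<le> n"
  shows "sig n k (Tact n k i m) = Rf n k (n - i) qq (sig n k m)"
proof
  fix x
  show "sig n k (Tact n k i m) x = Rf n k (n - i) qq (sig n k m) x"
  proof (cases "x \<in> Eset n k")
    case False then show ?thesis by (simp add: sig_def Rf_def Tact_out)
  next
    case True
    have ni: "1 \<le> n - i" "n - i + 1 \<le> n" using assms by auto
    obtain xs a b ys where x: "x = xs @ a # b # ys" "length xs = n - i - 1"
      using split2[OF Eset_len[OF True] ni] by blast
    have ly: "length ys = i - 1" using x Eset_len[OF True] assms by auto
    have i1: "n - i = length xs + 1" using x assms by auto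
    have i2: "i = length (rev ys) + 1" using ly assms by auto
    have mE: "\<And>a' b'. length (filter id [a',b']) = length (filter id [a,b]) \<Longrightarrow> xs @ a' # b' # ys \<in> Eset n k"
      using True unfolding x(1) by (rule mem_perm2)
    have mE': "\<And>a' b'. length (filter id [a',b']) = length (filter id [b,a]) \<Longrightarrow> rev ys @ a' # b' # rev xs \<in> Eset n k"
    proof -
      fix a' b' assume h: "length (filter id [a',b']) = length (filter id [b,a])"
      have "rev x = rev ys @ b # a # rev xs" using x by simp
      then have "rev ys @ b # a # rev xs \<in> Eset n k" using True rev_E[of x n k] by simp
      then show "rev ys @ a' # b' # rev xs \<in> Eset n k" using h by (rule mem_perm2)
    qed
    have rx: "rev x = rev ys @ b # a # rev xs" using x by simp
    have L: "sig n k (Tact n k i m) x = barQ (Tact n k i m (rev ys @ b # a # rev xs))"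
      using True rx by (simp add: sig_def)
    have R: "Rf n k (n - i) qq (sig n k m) x = Tact n k (n - i) (sig n k m) (xs @ a # b # ys) - qq * sig n k m x"
      using x by (simp add: Rf_def)
    have sw: "\<And>a' b'. sig n k m (xs @ a' # b' # ys) = (if xs @ a' # b' # ys \<in> Eset n k then barQ (m (rev ys @ b' # a' # rev xs)) else 0)"
      by (simp add: sig_def)
    show ?thesis unfolding L R
      apply (simp only: Tact_at[OF i1] Tact_at[OF i2])
      apply (cases a; cases b)
      apply (simp_all add: mE mE' sw x(1) barQ_simps algebra_simps)
      done
  qed
qed

lemma sig_lin: "sig n k (\<lambda>x. a x + c * b x) = (\<lambda>x. sig n k a x + barQ c * sig n k b x)"
  by (rule ext) (simp add: sig_def barQ_add barQ_mult)

lemma sig_Rf: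
  assumes "1 \<le> i" "i + 1 \<le> n"
  shows "sig n k (Rf n k i qq m) = Tact n k (n - i) (sig n k m)"
proof -
  have "Rf n k i qq m = (\<lambda>x. Tact n k i m x + (- qq) * m x)" by (simp add: Rf_def algebra_simps)
  then have "sig n k (Rf n k i qq m) = (\<lambda>x. sig n k (Tact n k i m) x + barQ (- qq) * sig n k m x)"
    by (simp add: sig_lin)
  also have "\<dots> = (\<lambda>x. Rf n k (n - i) qq (sig n k m) x + qq * sig n k m x)"
    using sig_Tact[OF assms] by (simp add: barQ_simps)
  also have "\<dots> = Tact n k (n - i) (sig n k m)" by (simp add: Rf_def)
  finally show ?thesis .
qed

definition W :: "nat \<Rightarrow> nat \<Rightarrow> modM \<Rightarrow> modM" where
  "W n k = bfam.Wg (\<lambda>i. Rf n k i qq) (n - 1)"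

lemma W_conj: "1 \<le> i \<Longrightarrow> i \<le> n - 1 \<Longrightarrow> W n k (Rf n k i qq u) = Rf n k (n - i) qq (W n k u)"
  using bfam.W_conj[OF bfam_T, of i "n - 1" n k u] by (simp add: W_def)

lemma W_lin: "W n k (\<lambda>x. a x + c * b x) = (\<lambda>x. W n k a x + c * W n k b x)"
  unfolding W_def by (rule bfam.W_lin[OF bfam_T])
lemma W_scale: "W n k (\<lambda>x. c * b x) = (\<lambda>x. c * W n k b x)"
  unfolding W_def by (rule bfam.W_scale[OF bfam_T])
lemma W_add: "W n k (\<lambda>x. a x + b x) = (\<lambda>x. W n k a x + W n k b x)"
  unfolding W_def by (rule bfam.W_add[OF bfam_T])

definition psi0 :: "nat \<Rightarrow> nat \<Rightarrow> modM \<Rightarrow> modM" where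
  "psi0 n k m = W n k (sig n k m)"

lemma psi0_Tact:
  assumes "1 \<le> i" "i \<le> n - 1"
  shows "psi0 n k (Tact n k i m) = Rf n k i qq (psi0 n k m)"
proof -
  have "psi0 n k (Tact n k i m) = W n k (Rf n k (n - i) qq (sig n k m))"
    using sig_Tact[of i n k m] assms by (simp add: psi0_def)
  also have "\<dots> = Rf n k (n - (n - i)) qq (W n k (sig n k m))" using assms by (intro W_conj) auto
  finally show ?thesis using assms by (simp add: psi0_def)
qed

lemma psi0_Rf:
  assumes "1 \<le> i" "i \<le> n - 1"
  shows "psi0 n k (Rf n k i qq m) = Tact n k i (psi0 n k m)"
proof -
  let ?u = "sig n k m"
  have "psi0 n k (Rf n k i qq m) = W n k (Tact n k (n - i) ?u)"
    using sig_Rf[of i n k m] assms by (simp add: psi0_def)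
  also have "Tact n k (n - i) ?u = (\<lambda>x. Rf n k (n - i) qq ?u x + qq * ?u x)" by (simp add: Rf_def)
  also have "W n k \<dots> = (\<lambda>x. W n k (Rf n k (n - i) qq ?u) x + qq * W n k ?u x)" by (rule W_lin)
  also have "W n k (Rf n k (n - i) qq ?u) = Rf n k (n - (n - i)) qq (W n k ?u)" using assms by (intro W_conj) auto
  finally show ?thesis using assms by (simp add: psi0_def Rf_def)
qed

lemma psi0_lin: "psi0 n k (\<lambda>x. a x + c * b x) = (\<lambda>x. psi0 n k a x + barQ c * psi0 n k b x)"
  by (simp add: psi0_def sig_lin W_lin)


lemma Rf_basis_FT:
  assumes e: "xs @ False # True # ys \<in> Eset n k"
  shows "Rf n k (Suc (length xs)) qq (basis (xs @ False # True # ys)) = basis (xs @ True # False # ys)"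
proof
  fix x
  have e': "xs @ True # False # ys \<in> Eset n k" using e by (rule mem_perm2) simp
  show "Rf n k (Suc (length xs)) qq (basis (xs @ False # True # ys)) x = basis (xs @ True # False # ys) x"
  proof (cases "x \<in> Eset n k")
    case False
    then have "x \<noteq> xs @ False # True # ys" "x \<noteq> xs @ True # False # ys" using e e' by auto
    then show ?thesis using False by (simp add: Rf_def Tact_out basis_def)
  next
    case True
    have l: "length x = n" using True by (rule Eset_len)
    have ln: "1 \<le> Suc (length xs)" "Suc (length xs) + 1 \<le> n" using Eset_len[OF e] by simp_all
    obtain xs' a b ys' where x: "x = xs' @ a # b # ys'" "length xs' = Suc (length xs) - 1"
      using split2[OF l ln] by blast
    have i1: "Suc (length xs) = length xs' + 1" using x by simp
    have lx: "length xs' = length xs" using x by simp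
    show ?thesis unfolding x(1) Rf_def
      apply (simp only: Tact_at[OF i1])
      using True x lx by (cases a; cases b) (auto simp: basis_def)
  qed
qed

lemma Rf_basis_same:
  assumes e: "xs @ c # c # ys \<in> Eset n k"
  shows "Rf n k (Suc (length xs)) F (basis (xs @ c # c # ys)) = (\<lambda>x. (- inverse V - F) * basis (xs @ c # c # ys) x)"
proof
  fix x
  show "Rf n k (Suc (length xs)) F (basis (xs @ c # c # ys)) x = (- inverse V - F) * basis (xs @ c # c # ys) x"
  proof (cases "x \<in> Eset n k")
    case False
    then have "x \<noteq> xs @ c # c # ys" using e by auto
    then show ?thesis using False by (simp add: Rf_def Tact_out basis_def)
  next
    case True
    have l: "length x = n" using True by (rule Eset_len)
    have ln: "1 \<le> Suc (length xs)" "Suc (length xs) + 1 \<le> n" using Eset_len[OF e] by simp_all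
    obtain xs' a b ys' where x: "x = xs' @ a # b # ys'" "length xs' = Suc (length xs) - 1"
      using split2[OF l ln] by blast
    have i1: "Suc (length xs) = length xs' + 1" using x by simp
    have lx: "length xs' = length xs" using x by simp
    show ?thesis unfolding x(1) Rf_def
      apply (simp only: Tact_at[OF i1])
      using True x lx by (cases a; cases b; cases c) (auto simp: basis_def algebra_simps)
  qed
qed

lemma Tact_basis_TF:
  assumes e: "xs @ True # False # ys \<in> Eset n k"
  shows "Tact n k (Suc (length xs)) (basis (xs @ True # False # ys)) = basis (xs @ False # True # ys)"
proof
  fix x
  have e': "xs @ False # True # ys \<in> Eset n k" using e by (rule mem_perm2) simp
  show "Tact n k (Suc (length xs)) (basis (xs @ True # False # ys)) x = basis (xs @ False # True # ys) x"
  proof (cases "x \<in> Eset n k")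
    case False
    then have "x \<noteq> xs @ False # True # ys" using e' by auto
    then show ?thesis using False by (simp add: Tact_out basis_def)
  next
    case True
    have l: "length x = n" using True by (rule Eset_len)
    have ln: "1 \<le> Suc (length xs)" "Suc (length xs) + 1 \<le> n" using Eset_len[OF e] by simp_all
    obtain xs' a b ys' where x: "x = xs' @ a # b # ys'" "length xs' = Suc (length xs) - 1"
      using split2[OF l ln] by blast
    have i1: "Suc (length xs) = length xs' + 1" using x by simp
    have lx: "length xs' = length xs" using x by simp
    show ?thesis unfolding x(1)
      apply (simp only: Tact_at[OF i1])
      using True x lx by (cases a; cases b) (auto simp: basis_def)
  qed
qed

definition Dq :: "nat \<Rightarrow> nat \<Rightarrow> nat \<Rightarrow> modM \<Rightarrow> modM" where
  "Dq n k = bfam.Dg (\<lambda>i. Rf n k i qq)"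
definition Wq :: "nat \<Rightarrow> nat \<Rightarrow> nat \<Rightarrow> modM \<Rightarrow> modM" where
  "Wq n k = bfam.Wg (\<lambda>i. Rf n k i qq)"

lemma Dq_0[simp]: "Dq n k 0 u = u"
  unfolding Dq_def using bfam.Dg.simps(1)[OF bfam_T] by simp
lemma Dq_Suc[simp]: "Dq n k (Suc m) u = Dq n k m (Rf n k (Suc m) qq u)"
  unfolding Dq_def using bfam.Dg.simps(2)[OF bfam_T] by simp
lemma Wq_0[simp]: "Wq n k 0 u = u"
  unfolding Wq_def using bfam.Wg.simps(1)[OF bfam_T] by simp
lemma Wq_Suc[simp]: "Wq n k (Suc m) u = Dq n k (Suc m) (Wq n k m u)"
  unfolding Wq_def Dq_def using bfam.Wg.simps(2)[OF bfam_T] by simp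
lemma Dq_scale: "Dq n k m (\<lambda>x. c * b x) = (\<lambda>x. c * Dq n k m b x)"
  unfolding Dq_def by (rule bfam.D_scale[OF bfam_T])
lemma W_Wq: "W n k = Wq n k (n - 1)" by (simp add: W_def Wq_def)

lemma rep_snoc: "replicate (Suc a) x @ l = replicate a x @ x # l"
  by (induct a) auto

lemma DqA:
  "replicate c True @ replicate a False @ True # rest \<in> Eset n k \<Longrightarrow>
   Dq n k (c + a) (basis (replicate c True @ replicate a False @ True # rest))
     = Dq n k c (basis (replicate c True @ True # replicate a False @ rest))"
proof (induct a arbitrary: rest)
  case 0 then show ?case by simp
next
  case (Suc a)
  let ?xs = "replicate c True @ replicate a False"
  have L: "replicate c True @ replicate (Suc a) False @ True # rest = ?xs @ False # True # rest"
    by (simp only: rep_snoc append_assoc)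
  have mem: "?xs @ False # True # rest \<in> Eset n k" using Suc.prems unfolding L .
  have "Dq n k (c + Suc a) (basis (replicate c True @ replicate (Suc a) False @ True # rest))
      = Dq n k (c + a) (Rf n k (Suc (length ?xs)) qq (basis (?xs @ False # True # rest)))"
    unfolding L by simp
  also have "\<dots> = Dq n k (c + a) (basis (?xs @ True # False # rest))"
    using Rf_basis_FT[OF mem] by simp
  also have "\<dots> = Dq n k c (basis (replicate c True @ True # replicate a False @ False # rest))"
  proof -
    have m2: "replicate c True @ replicate a False @ True # False # rest \<in> Eset n k"
      using mem_perm2[OF mem, of True False] by simp
    show ?thesis using Suc.hyps[OF m2] by simp
  qed
  finally show ?case by (simp add: replicate_app_Cons_same)
qed

lemma DqB:
  "replicate (Suc c) b @ r \<in> Eset n k \<Longrightarrow>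
   Dq n k c (basis (replicate (Suc c) b @ r)) = (\<lambda>x. (- V) ^ c * basis (replicate (Suc c) b @ r) x)"
proof (induct c arbitrary: r)
  case 0 then show ?case by simp
next
  case (Suc c)
  have L: "replicate (Suc (Suc c)) b @ r = replicate c b @ b # b # r" by (simp only: rep_snoc)
  have L2: "replicate (Suc (Suc c)) b @ r = replicate (Suc c) b @ (b # r)" by (simp only: rep_snoc)
  have M: "replicate c b @ b # b # r = replicate (Suc c) b @ (b # r)" by (simp only: rep_snoc)
  have mem: "replicate c b @ b # b # r \<in> Eset n k" using Suc.prems unfolding L .
  have mem2: "replicate (Suc c) b @ (b # r) \<in> Eset n k" using mem unfolding M .
  have "Dq n k (Suc c) (basis (replicate (Suc (Suc c)) b @ r))
     = Dq n k c (Rf n k (Suc (length (replicate c b))) qq (basis (replicate c b @ b # b # r)))"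
    unfolding L by simp
  also have "\<dots> = Dq n k c (\<lambda>x. (- V) * basis (replicate c b @ b # b # r) x)"
    using Rf_basis_same[OF mem, of qq] by simp
  also have "\<dots> = (\<lambda>x. (- V) * Dq n k c (basis (replicate c b @ b # b # r)) x)"
    by (rule Dq_scale)
  also have "\<dots> = (\<lambda>x. (- V) * Dq n k c (basis (replicate (Suc c) b @ (b # r))) x)"
    by (simp only: M)
  also have "\<dots> = (\<lambda>x. (- V) * ((- V) ^ c * basis (replicate (Suc c) b @ (b # r)) x))"
    by (simp only: Suc.hyps[OF mem2])
  also have "\<dots> = (\<lambda>x. (- V) ^ Suc c * basis (replicate (Suc (Suc c)) b @ r) x)"
    unfolding L2 by (simp only: power_Suc mult.assoc)
  finally show ?case .
qed

lemma WqC: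
  "a + b = Suc m \<Longrightarrow> replicate a False @ replicate b True @ rest \<in> Eset n k \<Longrightarrow>
   \<exists>e. Wq n k m (basis (replicate a False @ replicate b True @ rest)) = (\<lambda>x. (- V) ^ e * basis (replicate b True @ replicate a False @ rest) x)"
proof (induct m arbitrary: a b rest)
  case 0
  then have eq: "replicate a False @ replicate b True = replicate b True @ replicate a False"
    by (cases a; cases b) auto
  have "replicate a False @ replicate b True @ rest = (replicate a False @ replicate b True) @ rest" by simp
  also have "\<dots> = (replicate b True @ replicate a False) @ rest" by (simp only: eq)
  also have "\<dots> = replicate b True @ replicate a False @ rest" by simp
  finally have "replicate a False @ replicate b True @ rest = replicate b True @ replicate a False @ rest" .
  then have eqb: "basis (replicate a False @ replicate b True @ rest) = basis (replicate b True @ replicate a False @ rest)"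
    by (rule arg_cong)
  show ?case by (intro exI[of _ 0]) (simp only: Wq_0 power_0 mult_1 eqb)
next
  case (Suc m)
  show ?case
  proof (cases "b = 0")
    case False
    then obtain b' where bb: "b = Suc b'" by (cases b) auto
    have L: "replicate a False @ replicate b True @ rest = replicate a False @ replicate b' True @ True # rest"
      unfolding bb by (simp only: rep_snoc)
    have m0: "replicate a False @ replicate b' True @ True # rest \<in> Eset n k" using Suc.prems(2) unfolding L .
    have ab: "a + b' = Suc m" using Suc.prems(1) bb by simp
    obtain e where e: "Wq n k m (basis (replicate a False @ replicate b' True @ True # rest))
        = (\<lambda>x. (- V) ^ e * basis (replicate b' True @ replicate a False @ True # rest) x)"
      using Suc.hyps[OF ab m0] by blast
    have m1: "replicate b' True @ replicate a False @ True # rest \<in> Eset n k"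
      using Suc.prems L by (simp add: Eset_def)
    have m2: "replicate (Suc b') True @ replicate a False @ rest \<in> Eset n k"
      using Suc.prems by (simp add: Eset_def bb)
    have sm: "Suc m = b' + a" using Suc.prems bb by simp
    have "Wq n k (Suc m) (basis (replicate a False @ replicate b True @ rest))
        = Dq n k (Suc m) (Wq n k m (basis (replicate a False @ replicate b' True @ True # rest)))"
      unfolding L by (simp only: Wq_Suc)
    also have "\<dots> = Dq n k (b' + a) (\<lambda>x. (- V) ^ e * basis (replicate b' True @ replicate a False @ True # rest) x)"
      by (simp only: e sm)
    also have "\<dots> = (\<lambda>x. (- V) ^ e * Dq n k (b' + a) (basis (replicate b' True @ replicate a False @ True # rest)) x)"
      by (rule Dq_scale)
    also have "\<dots> = (\<lambda>x. (- V) ^ e * Dq n k b' (basis (replicate b' True @ True # replicate a False @ rest)) x)"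
      by (simp only: DqA[OF m1])
    also have "replicate b' True @ True # replicate a False @ rest = replicate (Suc b') True @ replicate a False @ rest"
      by (simp only: rep_snoc)
    also have "Dq n k b' (basis (replicate (Suc b') True @ replicate a False @ rest)) = (\<lambda>x. (- V) ^ b' * basis (replicate (Suc b') True @ replicate a False @ rest) x)"
      by (rule DqB[OF m2])
    finally show ?thesis using bb by (intro exI[of _ "e + b'"]) (simp add: power_add mult.assoc)
  next
    case True
    have a: "a = Suc (Suc m)" using Suc.prems True by simp
    have L: "replicate a False @ replicate b True @ rest = replicate (Suc m) False @ replicate 0 True @ False # rest"
      using a True by (simp only: rep_snoc replicate_0 append_Nil)
    have ab0: "Suc m + 0 = Suc m" by simp
    have m0': "replicate (Suc m) False @ replicate 0 True @ False # rest \<in> Eset n k" using Suc.prems(2) unfolding L .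
    obtain e where e: "Wq n k m (basis (replicate (Suc m) False @ replicate 0 True @ False # rest))
        = (\<lambda>x. (- V) ^ e * basis (replicate 0 True @ replicate (Suc m) False @ False # rest) x)"
      using Suc.hyps[OF ab0 m0'] by blast
    have m2: "replicate (Suc (Suc m)) False @ rest \<in> Eset n k" using Suc.prems a True by simp
    have L1: "replicate a False @ replicate b True @ rest = replicate (Suc (Suc m)) False @ rest" using a True by simp
    have L2: "replicate (Suc (Suc m)) False @ rest = replicate (Suc m) False @ replicate 0 True @ False # rest"
      by (simp only: rep_snoc replicate_0 append_Nil)
    have L3: "replicate 0 True @ replicate (Suc m) False @ False # rest = replicate (Suc (Suc m)) False @ rest"
      by (simp only: rep_snoc replicate_0 append_Nil)
    have "Wq n k (Suc m) (basis (replicate a False @ replicate b True @ rest))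
        = Dq n k (Suc m) (Wq n k m (basis (replicate (Suc m) False @ replicate 0 True @ False # rest)))"
      unfolding L1 L2 by (simp only: Wq_Suc)
    also have "\<dots> = Dq n k (Suc m) (\<lambda>x. (- V) ^ e * basis (replicate (Suc (Suc m)) False @ rest) x)"
      by (simp only: e L3)
    also have "\<dots> = (\<lambda>x. (- V) ^ e * Dq n k (Suc m) (basis (replicate (Suc (Suc m)) False @ rest)) x)"
      by (rule Dq_scale)
    also have "Dq n k (Suc m) (basis (replicate (Suc (Suc m)) False @ rest)) = (\<lambda>x. (- V) ^ Suc m * basis (replicate (Suc (Suc m)) False @ rest) x)"
      by (rule DqB[OF m2])
    finally show ?thesis using a True by (intro exI[of _ "e + Suc m"]) (simp add: power_add mult_ac)
  qed
qed


definition lowseq :: "nat \<Rightarrow> nat \<Rightarrow> bool list" where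
  "lowseq n k = replicate (n - k) False @ replicate k True"

lemma one_E: "k \<le> n \<Longrightarrow> one_seq n k \<in> Eset n k" by (simp add: one_seq_def Eset_def)
lemma low_E: "k \<le> n \<Longrightarrow> lowseq n k \<in> Eset n k" by (simp add: lowseq_def Eset_def)
lemma rev_one: "rev (one_seq n k) = lowseq n k" by (simp add: one_seq_def lowseq_def)

lemma sig_basis: "e \<in> Eset n k \<Longrightarrow> sig n k (basis e) = basis (rev e)"
  by (rule ext) (auto simp: sig_def basis_def rev_swap)

lemma W_low: assumes "1 \<le> n" "k \<le> n"
  shows "\<exists>e. W n k (basis (lowseq n k)) = (\<lambda>x. (- V) ^ e * basis (one_seq n k) x)"
proof -
  have ab: "(n - k) + k = Suc (n - 1)" using assms by simp
  have m: "replicate (n - k) False @ replicate k True @ [] \<in> Eset n k" using assms by (simp add: Eset_def)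
  obtain e where "Wq n k (n - 1) (basis (replicate (n - k) False @ replicate k True @ [])) =
     (\<lambda>x. (- V) ^ e * basis (replicate k True @ replicate (n - k) False @ []) x)"
    using WqC[OF ab m] by blast
  then show ?thesis by (intro exI[of _ e]) (simp add: W_Wq lowseq_def one_seq_def)
qed

lemma psi0_one: assumes "1 \<le> n" "k \<le> n"
  shows "\<exists>e. psi0 n k (basis (one_seq n k)) = (\<lambda>x. (- V) ^ e * basis (one_seq n k) x)"
  using W_low[OF assms] by (simp add: psi0_def sig_basis[OF one_E[OF assms(2)]] rev_one)

definition mu :: "nat \<Rightarrow> nat \<Rightarrow> qv" where
  "mu n k = (SOME c. c \<noteq> 0 \<and> psi0 n k (basis (one_seq n k)) = (\<lambda>x. c * basis (one_seq n k) x))"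

lemma mu: assumes "1 \<le> n" "k \<le> n"
  shows "mu n k \<noteq> 0 \<and> psi0 n k (basis (one_seq n k)) = (\<lambda>x. mu n k * basis (one_seq n k) x)"
proof -
  obtain e where e: "psi0 n k (basis (one_seq n k)) = (\<lambda>x. (- V) ^ e * basis (one_seq n k) x)"
    using psi0_one[OF assms] by blast
  have "(- V) ^ e \<noteq> 0" by simp
  then have "\<exists>c. c \<noteq> 0 \<and> psi0 n k (basis (one_seq n k)) = (\<lambda>x. c * basis (one_seq n k) x)" using e by blast
  then show ?thesis unfolding mu_def by (rule someI_ex)
qed

definition psi :: "nat \<Rightarrow> nat \<Rightarrow> modM \<Rightarrow> modM" where
  "psi n k m = (\<lambda>x. inverse (mu n k) * psi0 n k m x)"

lemma psi_one: assumes "1 \<le> n" "k \<le> n" shows "psi n k (basis (one_seq n k)) = basis (one_seq n k)"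
  using mu[OF assms] by (simp add: psi_def fun_eq_iff)

lemma sig_zero: "sig n k (\<lambda>x. 0) = (\<lambda>x. 0)"
proof
  fix x show "sig n k (\<lambda>x. 0) x = 0" using barQ_0 by (simp add: sig_def)
qed
lemma W_zero: "W n k (\<lambda>x. 0) = (\<lambda>x. 0)" unfolding W_def by (rule bfam.W_zero[OF bfam_T])
lemma psi_zero: "psi n k (\<lambda>x. 0) = (\<lambda>x. 0)" by (simp add: psi_def psi0_def sig_zero W_zero)

lemma psi_lin: "psi n k (\<lambda>x. a x + c * b x) = (\<lambda>x. psi n k a x + barQ c * psi n k b x)"
  by (simp add: psi_def psi0_lin algebra_simps)
lemma psi_scale: "psi n k (\<lambda>x. c * b x) = (\<lambda>x. barQ c * psi n k b x)"
  using psi_lin[of n k "\<lambda>x. 0" c b] by (simp add: psi_zero)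
lemma psi_add: "psi n k (\<lambda>x. a x + b x) = (\<lambda>x. psi n k a x + psi n k b x)"
  using psi_lin[of n k a 1 b] by simp
lemma psi_diff: "psi n k (\<lambda>x. a x - b x) = (\<lambda>x. psi n k a x - psi n k b x)"
  using psi_lin[of n k a "-1" b] by (simp add: barQ_minus)

lemma Rf_scale: "Rf n k i F (\<lambda>x. c * u x) = (\<lambda>x. c * Rf n k i F u x)"
  by (rule ext) (simp add: Rf_def Tact_def algebra_simps)
lemma Tact_scale: "Tact n k i (\<lambda>x. c * u x) = (\<lambda>x. c * Tact n k i u x)"
  by (rule ext) (simp add: Tact_def algebra_simps)

lemma psi_Tact: "1 \<le> i \<Longrightarrow> i \<le> n - 1 \<Longrightarrow> psi n k (Tact n k i m) = Rf n k i qq (psi n k m)"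
  by (simp add: psi_def psi0_Tact Rf_scale)
lemma psi_Rf: "1 \<le> i \<Longrightarrow> i \<le> n - 1 \<Longrightarrow> psi n k (Rf n k i qq m) = Tact n k i (psi n k m)"
  by (simp add: psi_def psi0_Rf Tact_scale)

lemma hact_HTinv: "hact n k (HTinv i) m = Rf n k i qq m" by (simp add: Rf_def)

lemma valid_HAdd: "valid_h n (HAdd a b) \<longleftrightarrow> valid_h n a \<and> valid_h n b" by (auto simp: valid_h_def)
lemma valid_HMul: "valid_h n (HMul a b) \<longleftrightarrow> valid_h n a \<and> valid_h n b" by (auto simp: valid_h_def)
lemma valid_HT: "valid_h n (HT i) \<longleftrightarrow> 1 \<le> i \<and> i \<le> n - 1" by (auto simp: valid_h_def)
lemma valid_HTinv: "valid_h n (HTinv i) \<longleftrightarrow> 1 \<le> i \<and> i \<le> n - 1" by (auto simp: valid_h_def)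
lemma valid_HScal: "valid_h n (HScal c)" by (auto simp: valid_h_def)

lemma psi_hact: "valid_h n h \<Longrightarrow> hact n k (barH h) (psi n k m) = psi n k (hact n k h m)"
proof (induct h arbitrary: m)
  case (HScal c) then show ?case by (simp add: psi_scale)
next
  case (HT i)
  then have i: "1 \<le> i" "i \<le> n - 1" by (auto simp: valid_HT)
  show ?case using psi_Tact[OF i, of k m] by (simp add: Rf_def)
next
  case (HTinv i)
  then have i: "1 \<le> i" "i \<le> n - 1" by (auto simp: valid_HTinv)
  show ?case using psi_Rf[OF i, of k m] by (simp add: Rf_def)
next
  case (HAdd a b) then show ?case by (simp add: valid_HAdd psi_add)
next
  case (HMul a b) then show ?case by (simp add: valid_HMul)
qed

lemma barM_psi:
  assumes "1 \<le> n" "k \<le> n" "valid_h n h"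
  shows "barM n k (hact n k h (basis (one_seq n k))) = psi n k (hact n k h (basis (one_seq n k)))"
proof -
  let ?c = "hact n k h (basis (one_seq n k))"
  have w: "\<And>h'. valid_h n h' \<Longrightarrow> hact n k (barH h') (basis (one_seq n k)) = psi n k (hact n k h' (basis (one_seq n k)))"
    using psi_hact psi_one[OF assms(1,2)] by metis
  show ?thesis unfolding barM_def
  proof (rule some_equality)
    show "\<exists>h'. valid_h n h' \<and> hact n k h' (basis (one_seq n k)) = ?c \<and> psi n k ?c = hact n k (barH h') (basis (one_seq n k))"
      using assms(3) w[OF assms(3)] by auto
  next
    fix y assume "\<exists>h'. valid_h n h' \<and> hact n k h' (basis (one_seq n k)) = ?c \<and> y = hact n k (barH h') (basis (one_seq n k))"
    then show "y = psi n k ?c" using w by auto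
  qed
qed


lemma noFT: "(\<forall>j. Suc j < length e \<longrightarrow> \<not> (\<not> e ! j \<and> e ! Suc j)) \<Longrightarrow>
   e = replicate (length (filter id e)) True @ replicate (length e - length (filter id e)) False"
proof (induct e)
  case Nil then show ?case by simp
next
  case (Cons c e)
  have h: "\<forall>j. Suc j < length e \<longrightarrow> \<not> (\<not> e ! j \<and> e ! Suc j)"
  proof (intro allI impI)
    fix j assume "Suc j < length e"
    then show "\<not> (\<not> e ! j \<and> e ! Suc j)" using Cons.prems[rule_format, of "Suc j"] by simp
  qed
  have IH: "e = replicate (length (filter id e)) True @ replicate (length e - length (filter id e)) False"
    using Cons.hyps[OF h] .
  show ?case
  proof (cases c)
    case True then show ?thesis using IH by (simp add: id_def)
  next
    case False
    show ?thesis
    proof (cases "length (filter id e)")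
      case 0
      then have "e = replicate (length e) False" using IH by simp
      then obtain L where "e = replicate L False" by blast
      then show ?thesis using False by (simp add: filter_replicate id_def)
    next
      case (Suc p)
      then have "e ! 0 = True" using IH by (metis append_Cons nth_Cons_0 replicate_Suc)
      moreover have "e \<noteq> []" using Suc by auto
      ultimately show ?thesis using Cons.prems[rule_format, of 0] False by simp
    qed
  qed
qed

lemma noTF: "(\<forall>j. Suc j < length e \<longrightarrow> \<not> (e ! j \<and> \<not> e ! Suc j)) \<Longrightarrow>
   e = replicate (length e - length (filter id e)) False @ replicate (length (filter id e)) True"
proof (induct e)
  case Nil then show ?case by simp
next
  case (Cons c e)
  have h: "\<forall>j. Suc j < length e \<longrightarrow> \<not> (e ! j \<and> \<not> e ! Suc j)"
  proof (intro allI impI)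
    fix j assume "Suc j < length e"
    then show "\<not> (e ! j \<and> \<not> e ! Suc j)" using Cons.prems[rule_format, of "Suc j"] by simp
  qed
  have IH: "e = replicate (length e - length (filter id e)) False @ replicate (length (filter id e)) True"
    using Cons.hyps[OF h] .
  have le: "length (filter id e) \<le> length e" by (rule length_filter_le)
  show ?case
  proof (cases c)
    case False then show ?thesis using IH le by (simp add: Suc_diff_le id_def)
  next
    case True
    show ?thesis
    proof (cases "length e - length (filter id e)")
      case 0
      then have "e = replicate (length e) True" using IH le by simp
      then obtain L where "e = replicate L True" by blast
      then show ?thesis using True by (simp add: filter_replicate id_def replicate_append_same)
    next
      case (Suc p)
      then have "e ! 0 = False" using IH by (metis append_Cons nth_Cons_0 replicate_Suc)
      moreover have "e \<noteq> []" using Suc by auto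
      ultimately show ?thesis using Cons.prems[rule_format, of 0] True by simp
    qed
  qed
qed

lemma find_FT: assumes "e \<in> Eset n k" "e \<noteq> one_seq n k" shows "\<exists>xs ys. e = xs @ False # True # ys"
proof (rule ccontr)
  assume no: "\<not> ?thesis"
  have "\<forall>j. Suc j < length e \<longrightarrow> \<not> (\<not> e ! j \<and> e ! Suc j)"
  proof (intro allI impI notI)
    fix j assume j: "Suc j < length e" and p: "\<not> e ! j \<and> e ! Suc j"
    obtain xs a b ys where x: "e = xs @ a # b # ys" "length xs = Suc j - 1"
      using split2[of e "length e" "Suc j"] j by auto
    have ab: "a = e ! j" "b = e ! Suc j" using x by (simp_all add: nth_append)
    have "e = xs @ False # True # ys" using x(1) ab p by simp
    then show False using no by blast
  qed
  then have "e = replicate (length (filter id e)) True @ replicate (length e - length (filter id e)) False" by (rule noFT)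
  then show False using assms by (simp add: Eset_def one_seq_def)
qed

lemma find_TF: assumes "e \<in> Eset n k" "e \<noteq> lowseq n k" shows "\<exists>xs ys. e = xs @ True # False # ys"
proof (rule ccontr)
  assume no: "\<not> ?thesis"
  have "\<forall>j. Suc j < length e \<longrightarrow> \<not> (e ! j \<and> \<not> e ! Suc j)"
  proof (intro allI impI notI)
    fix j assume j: "Suc j < length e" and p: "e ! j \<and> \<not> e ! Suc j"
    obtain xs a b ys where x: "e = xs @ a # b # ys" "length xs = Suc j - 1"
      using split2[of e "length e" "Suc j"] j by auto
    have ab: "a = e ! j" "b = e ! Suc j" using x by (simp_all add: nth_append)
    have "e = xs @ True # False # ys" using x(1) ab p by simp
    then show False using no by blast
  qed
  then have "e = replicate (length e - length (filter id e)) False @ replicate (length (filter id e)) True" by (rule noTF)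
  then show False using assms by (simp add: Eset_def lowseq_def)
qed

lemma cyc_basis:
  assumes "k \<le> n" shows "e \<in> Eset n k \<Longrightarrow> \<exists>h. valid_h n h \<and> hact n k h (basis (one_seq n k)) = basis e"
proof (induction "phi e" arbitrary: e rule: less_induct)
  case less
  show ?case
  proof (cases "e = one_seq n k")
    case True then show ?thesis by (intro exI[of _ "HScal 1"]) (simp add: valid_HScal)
  next
    case False
    then obtain xs ys where e: "e = xs @ False # True # ys" using find_FT less.prems by blast
    let ?e' = "xs @ True # False # ys"
    have m': "?e' \<in> Eset n k" using less.prems unfolding e by (rule mem_perm2) simp
    have "phi ?e' < phi e" unfolding e by (simp add: phi_FT)
    then obtain h' where h': "valid_h n h'" "hact n k h' (basis (one_seq n k)) = basis ?e'"
      using less.hyps m' by blast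
    have i: "1 \<le> Suc (length xs)" "Suc (length xs) \<le> n - 1" using Eset_len[OF less.prems] e by auto
    show ?thesis
      apply (intro exI[of _ "HMul (HT (Suc (length xs))) h'"])
      using h' i Tact_basis_TF[OF m'] e by (simp add: valid_HMul valid_HT)
  qed
qed

lemma finite_E: "finite (Eset n k)"
proof -
  have "Eset n k \<subseteq> {xs. set xs \<subseteq> UNIV \<and> length xs = n}" by (auto simp: Eset_def)
  moreover have "finite {xs. set xs \<subseteq> (UNIV::bool set) \<and> length xs = n}" by (rule finite_lists_length_eq) simp
  ultimately show ?thesis by (rule finite_subset)
qed

lemma cyc_aux:
  assumes "k \<le> n"
  shows "finite S \<Longrightarrow> S \<subseteq> Eset n k \<Longrightarrow> \<forall>c. (\<forall>x. x \<notin> S \<longrightarrow> c x = 0) \<longrightarrow> (\<exists>h. valid_h n h \<and> hact n k h (basis (one_seq n k)) = c)"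
proof (induct S rule: finite_induct)
  case empty
  show ?case
  proof (intro allI impI)
    fix c :: modM assume "\<forall>x. x \<notin> {} \<longrightarrow> c x = 0"
    then have "c = (\<lambda>x. 0)" by auto
    then show "\<exists>h. valid_h n h \<and> hact n k h (basis (one_seq n k)) = c"
      by (intro exI[of _ "HScal 0"]) (simp add: valid_HScal)
  qed
next
  case (insert e S)
  show ?case
  proof (intro allI impI)
    fix c :: modM assume c: "\<forall>x. x \<notin> insert e S \<longrightarrow> c x = 0"
    let ?c' = "\<lambda>x. if x = e then 0 else c x"
    have sub: "S \<subseteq> Eset n k" using insert.prems by simp
    have "\<forall>x. x \<notin> S \<longrightarrow> ?c' x = 0" using c by auto
    then have "\<exists>h. valid_h n h \<and> hact n k h (basis (one_seq n k)) = ?c'"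
      using insert.hyps(3)[OF sub, rule_format, of ?c'] by simp
    then obtain h' where h': "valid_h n h'" "hact n k h' (basis (one_seq n k)) = ?c'"
      by blast
    obtain he where he: "valid_h n he" "hact n k he (basis (one_seq n k)) = basis e"
      using cyc_basis[OF assms] insert by blast
    show "\<exists>h. valid_h n h \<and> hact n k h (basis (one_seq n k)) = c"
      apply (intro exI[of _ "HAdd h' (HMul (HScal (c e)) he)"])
      using h' he by (auto simp: valid_HAdd valid_HMul valid_HScal basis_def fun_eq_iff)
  qed
qed

lemma cyc: "k \<le> n \<Longrightarrow> inM n k c \<Longrightarrow> \<exists>h. valid_h n h \<and> hact n k h (basis (one_seq n k)) = c"
  using cyc_aux[OF _ finite_E subset_refl] by (auto simp: inM_def)


lemma tri:
  assumes n: "1 \<le> n" "k \<le> n"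
  shows "e \<in> Eset n k \<Longrightarrow> psi n k (basis e) e = 1 \<and> (\<forall>x. psi n k (basis e) x \<noteq> 0 \<longrightarrow> x = e \<or> phi x < phi e)"
proof (induction "phi e" arbitrary: e rule: less_induct)
  case less
  show ?case
  proof (cases "e = one_seq n k")
    case True then show ?thesis using psi_one[OF n] by (simp add: basis_def)
  next
    case False
    then obtain xs ys where e: "e = xs @ False # True # ys" using find_FT less.prems by blast
    let ?e' = "xs @ True # False # ys"
    have m': "?e' \<in> Eset n k" using less.prems unfolding e by (rule mem_perm2) simp
    have ph: "phi e = Suc (phi ?e')" unfolding e by (simp add: phi_FT)
    have IH: "psi n k (basis ?e') ?e' = 1 \<and> (\<forall>x. psi n k (basis ?e') x \<noteq> 0 \<longrightarrow> x = ?e' \<or> phi x < phi ?e')"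
      using less.hyps m' ph by simp
    let ?u = "psi n k (basis ?e')"
    have i: "1 \<le> Suc (length xs)" "Suc (length xs) \<le> n - 1" using Eset_len[OF less.prems] e by auto
    have pe: "psi n k (basis e) = Rf n k (Suc (length xs)) qq ?u"
      using Tact_basis_TF[OF m'] psi_Tact[OF i, of k "basis ?e'"] e by simp
    have i1: "Suc (length xs) = length xs + 1" by simp
    have v1: "psi n k (basis e) e = 1"
      unfolding pe Rf_def using less.prems IH unfolding e by (simp add: Tact_at[OF i1])
    have v2: "x = e \<or> phi x < phi e" if nz: "psi n k (basis e) x \<noteq> 0" for x
    proof (cases "x \<in> Eset n k")
      case False
      then have "?u x \<noteq> 0" using nz unfolding pe Rf_def by (auto simp: Tact_out)
      then have "x = ?e' \<or> phi x < phi ?e'" using IH by blast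
      then show ?thesis using False m' ph by auto
    next
      case True
      have l: "length x = n" using True by (rule Eset_len)
      have ln: "1 \<le> Suc (length xs)" "Suc (length xs) + 1 \<le> n" using Eset_len[OF less.prems] e by auto
      obtain xs' a b ys' where x: "x = xs' @ a # b # ys'" "length xs' = Suc (length xs) - 1"
        using split2[OF l ln] by blast
      have i2: "Suc (length xs) = length xs' + 1" using x by simp
      have lx: "length xs' = length xs" using x by simp
      have nz': "Rf n k (Suc (length xs)) qq ?u (xs' @ a # b # ys') \<noteq> 0" using nz pe x by simp
      show ?thesis
      proof (cases a; cases b)
        assume ab: "a" "b"
        then have "?u x \<noteq> 0" using nz' True x by (auto simp: Rf_def Tact_at[OF i2])
        then have "x = ?e' \<or> phi x < phi ?e'" using IH by blast
        then show ?thesis using ph by auto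
      next
        assume ab: "\<not> a" "\<not> b"
        then have "?u x \<noteq> 0" using nz' True x by (auto simp: Rf_def Tact_at[OF i2])
        then have "x = ?e' \<or> phi x < phi ?e'" using IH by blast
        then show ?thesis using ph by auto
      next
        assume ab: "a" "\<not> b"
        then have "?u (xs' @ False # True # ys') \<noteq> 0 \<or> ?u x \<noteq> 0" using nz' True x by (auto simp: Rf_def Tact_at[OF i2])
        then show ?thesis
        proof
          assume "?u (xs' @ False # True # ys') \<noteq> 0"
          then have "xs' @ False # True # ys' = ?e' \<or> phi (xs' @ False # True # ys') < phi ?e'" using IH by blast
          moreover have "xs' @ False # True # ys' \<noteq> ?e'" using lx by simp
          ultimately show ?thesis using ph ab x by (simp add: phi_FT)
        next
          assume "?u x \<noteq> 0"
          then have "x = ?e' \<or> phi x < phi ?e'" using IH by blast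
          then show ?thesis using ph by auto
        qed
      next
        assume ab: "\<not> a" "b"
        then have "?u (xs' @ True # False # ys') \<noteq> 0" using nz' True x by (auto simp: Rf_def Tact_at[OF i2])
        then have "xs' @ True # False # ys' = ?e' \<or> phi (xs' @ True # False # ys') < phi ?e'" using IH by blast
        then show ?thesis
        proof
          assume "xs' @ True # False # ys' = ?e'"
          then have "xs' = xs" "ys' = ys" using lx by auto
          then show ?thesis using x ab e by simp
        next
          assume "phi (xs' @ True # False # ys') < phi ?e'"
          then show ?thesis using ph x ab by (simp add: phi_FT)
        qed
      qed
    qed
    show ?thesis using v1 v2 by blast
  qed
qed

lemma inM_sum: "inM n k u \<Longrightarrow> u = (\<lambda>x. \<Sum>y\<in>Eset n k. u y * basis y x)"
proof (rule ext)
  fix x assume u: "inM n k u"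
  have "(\<Sum>y\<in>Eset n k. u y * basis y x) = (\<Sum>y\<in>Eset n k. if x = y then u y else 0)"
    by (rule sum.cong) (auto simp: basis_def)
  also have "\<dots> = (if x \<in> Eset n k then u x else 0)" using finite_E by simp
  also have "\<dots> = u x" using u by (auto simp: inM_def)
  finally show "u x = (\<Sum>y\<in>Eset n k. u y * basis y x)" by simp
qed

lemma psi_sum: "finite S \<Longrightarrow> psi n k (\<lambda>x. \<Sum>y\<in>S. f y * basis y x) = (\<lambda>x. \<Sum>y\<in>S. barQ (f y) * psi n k (basis y) x)"
proof (induct S rule: finite_induct)
  case empty then show ?case by (simp add: psi_zero)
next
  case (insert e S)
  have "(\<lambda>x. \<Sum>y\<in>insert e S. f y * basis y x) = (\<lambda>x. (\<Sum>y\<in>S. f y * basis y x) + f e * basis e x)"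
    using insert by (simp add: add.commute)
  then have "psi n k (\<lambda>x. \<Sum>y\<in>insert e S. f y * basis y x) = (\<lambda>x. psi n k (\<lambda>x. \<Sum>y\<in>S. f y * basis y x) x + barQ (f e) * psi n k (basis e) x)"
    by (simp add: psi_lin)
  then show ?case using insert by (simp add: add.commute)
qed

lemma psi_expand: "inM n k u \<Longrightarrow> psi n k u x = (\<Sum>y\<in>Eset n k. barQ (u y) * psi n k (basis y) x)"
proof -
  assume u: "inM n k u"
  have "psi n k u = psi n k (\<lambda>x. \<Sum>y\<in>Eset n k. u y * basis y x)" using inM_sum[OF u] by simp
  also have "\<dots> = (\<lambda>x. \<Sum>y\<in>Eset n k. barQ (u y) * psi n k (basis y) x)" by (rule psi_sum[OF finite_E])
  finally show ?thesis by simp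
qed

lemma vZv_0: "0 \<in> vZv" unfolding vZv_def by (rule CollectI, rule exI[of _ 0]) (simp add: Zero_fract_def)

lemma vZv_diff: assumes "a \<in> vZv" "b \<in> vZv" shows "a - b \<in> vZv"
proof -
  obtain p where p: "a = Fract p 1" "\<forall>i. coeff p i \<in> \<int>" "coeff p 0 = 0" using assms(1) unfolding vZv_def by blast
  obtain p' where p': "b = Fract p' 1" "\<forall>i. coeff p' i \<in> \<int>" "coeff p' 0 = 0" using assms(2) unfolding vZv_def by blast
  have "a - b = Fract (p - p') 1" using p p' by simp
  moreover have "\<forall>i. coeff (p - p') i \<in> \<int>" using p p' by (simp add: Ints_diff)
  moreover have "coeff (p - p') 0 = 0" using p p' by simp
  ultimately show ?thesis unfolding vZv_def by blast
qed

lemma vZv_pow: "1 \<le> e \<Longrightarrow> (- V) ^ e \<in> vZv"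
proof -
  assume e: "1 \<le> e"
  have "- V = iota (monom (-1) 1)" by (simp add: V_iota iota_minus[symmetric] monom_Suc monom_0)
  then have "(- V) ^ e = iota (monom ((-1) ^ e) e)" by (simp add: iota_power[symmetric] monom_power)
  moreover have "\<forall>i. coeff (monom ((-1::rat) ^ e) e) i \<in> \<int>" by simp
  moreover have "coeff (monom ((-1::rat) ^ e) e) 0 = 0" using e by simp
  ultimately show ?thesis unfolding vZv_def iota_def by blast
qed

lemma vZv_bar0: assumes "d \<in> vZv" "barQ d = d" shows "d = 0"
proof -
  obtain p where p: "d = Fract p 1" "coeff p 0 = 0" using assms(1) unfolding vZv_def by blast
  have "barQ (Fract p 1) = subst_inv p / subst_inv 1" by (rule barQ_Fract) simp
  then have s: "subst_inv p = iota p" using assms(2) p by (simp add: sinv_1 iota_def)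
  show ?thesis
  proof (rule ccontr)
    assume "d \<noteq> 0"
    then have p0: "p \<noteq> 0" using p by (auto simp: Zero_fract_def)
    have dg: "degree (map_poly qconst p) = degree p"
      by (rule degree_map_poly) (metis qconst_0 qconst_inj)
    have "poly (reflect_poly (map_poly qconst p)) V = V ^ degree (map_poly qconst p) * poly (map_poly qconst p) (inverse V)"
      by (rule poly_reflect_poly_nz) simp
    then have "iota (reflect_poly p) = V ^ degree p * iota p"
      using s by (simp add: reflect_map_qconst poly_qconst_V dg subst_inv_def)
    then have "iota (reflect_poly p) = iota ([:0,1:] ^ degree p * p)" by (simp add: V_iota iota_power iota_mult)
    then have r: "reflect_poly p = [:0,1:] ^ degree p * p" by (simp add: iota_inj)
    have "degree ([:0,1::rat:] ^ degree p * p) = degree p + degree p"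
      using p0 by (simp add: degree_mult_eq degree_power_eq)
    then have "degree p + degree p \<le> degree p" using degree_reflect_poly_le[of p] r by simp
    then have "degree p = 0" by simp
    then have "p = 0" using p(2) by (metis degree_0_id pCons_0_0)
    then show False using p0 by simp
  qed
qed

lemma uniq:
  assumes n: "1 \<le> n" "k \<le> n" and d: "inM n k d" "psi n k d = d" "\<forall>x\<in>Eset n k. d x \<in> vZv"
  shows "d = (\<lambda>x. 0)"
proof (rule ccontr)
  assume nz: "d \<noteq> (\<lambda>x. 0)"
  let ?S = "{x \<in> Eset n k. d x \<noteq> 0}"
  have fS: "finite ?S" using finite_E by simp
  have neS: "?S \<noteq> {}" using nz d(1) by (auto simp: inM_def fun_eq_iff)
  have "Max (phi ` ?S) \<in> phi ` ?S" using fS neS by (intro Max_in) auto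
  then obtain x0 where x0: "x0 \<in> ?S" "phi x0 = Max (phi ` ?S)" by (metis (no_types, lifting) imageE)
  have mx: "\<And>y. y \<in> ?S \<Longrightarrow> phi y \<le> phi x0" using x0 fS by simp
  have "d x0 = psi n k d x0" using d(2) by simp
  also have "\<dots> = (\<Sum>y\<in>Eset n k. barQ (d y) * psi n k (basis y) x0)" by (rule psi_expand[OF d(1)])
  also have "\<dots> = barQ (d x0) * psi n k (basis x0) x0 + (\<Sum>y\<in>Eset n k - {x0}. barQ (d y) * psi n k (basis y) x0)"
    using sum.remove[OF finite_E[of n k], of x0 "\<lambda>y. barQ (d y) * psi n k (basis y) x0"] x0 by simp
  also have "(\<Sum>y\<in>Eset n k - {x0}. barQ (d y) * psi n k (basis y) x0) = 0"
  proof (rule sum.neutral, rule ballI)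
    fix y assume y: "y \<in> Eset n k - {x0}"
    show "barQ (d y) * psi n k (basis y) x0 = 0"
    proof (cases "d y = 0")
      case True then show ?thesis using barQ_0 by simp
    next
      case False
      then have "phi y \<le> phi x0" using mx y by auto
      then have "psi n k (basis y) x0 = 0" using tri[OF n, of y] y by force
      then show ?thesis by simp
    qed
  qed
  also have "psi n k (basis x0) x0 = 1" using tri[OF n, of x0] x0 by simp
  finally have "barQ (d x0) = d x0" by simp
  then have "d x0 = 0" using vZv_bar0 d(3) x0 by auto
  then show False using x0 by simp
qed


lemma phi_repF: "phi (replicate a False) = 0" by (induct a) auto
lemma phi_repT: "phi (replicate (Suc b) True) = phi (replicate b True) + b" by simp

lemma phi_bound: "phi x \<le> phi (replicate (length (filter id x)) True) + (length x - length (filter id x)) * length (filter id x)"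
proof (induct x)
  case Nil then show ?case by simp
next
  case (Cons c x)
  define cc where "cc = length (filter id x)"
  define a where "a = length x - cc"
  have le: "cc \<le> length x" unfolding cc_def by (rule length_filter_le)
  have IH: "phi x \<le> phi (replicate cc True) + a * cc" using Cons unfolding cc_def a_def .
  show ?case
  proof (cases c)
    case True
    have 1: "length (filter id (c # x)) = Suc cc" using True by (simp add: cc_def)
    have 2: "length (c # x) - Suc cc = a" using le by (simp add: a_def)
    have 3: "phi (c # x) = phi x + cc" by (simp add: cc_def)
    have "phi x + cc \<le> phi (replicate (Suc cc) True) + a * Suc cc" using IH by simp
    then show ?thesis unfolding 1 2 3 .
  next
    case False
    have 1: "length (filter id (c # x)) = cc" using False by (simp add: cc_def)
    have 2: "length (c # x) - cc = Suc a" using le by (simp add: a_def)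
    have 3: "phi (c # x) = phi x + cc" by (simp add: cc_def)
    have "phi x + cc \<le> phi (replicate cc True) + Suc a * cc" using IH by simp
    then show ?thesis unfolding 1 2 3 .
  qed
qed

lemma phi_low: "phi (lowseq n k) = phi (replicate k True) + (n - k) * k"
  by (simp add: lowseq_def phi_append phi_repF)

lemma phi_le_low: "x \<in> Eset n k \<Longrightarrow> phi x \<le> phi (lowseq n k)"
  using phi_bound[of x] by (simp add: Eset_def phi_low)

definition Dv :: "nat \<Rightarrow> nat \<Rightarrow> modM" where
  "Dv n k = (\<lambda>x. if x \<in> Eset n k then (- V) ^ (phi (lowseq n k) - phi x) else 0)"

lemma inM_Dv: "inM n k (Dv n k)" by (simp add: inM_def Dv_def)
lemma Dv_low: "k \<le> n \<Longrightarrow> Dv n k (lowseq n k) = 1" by (simp add: Dv_def low_E)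

lemma Dv_sign:
  assumes i: "1 \<le> i" "i \<le> n - 1"
  shows "Tact n k i (Dv n k) = (\<lambda>x. - inverse V * Dv n k x)"
proof
  fix x
  show "Tact n k i (Dv n k) x = - inverse V * Dv n k x"
  proof (cases "x \<in> Eset n k")
    case False then show ?thesis by (simp add: Tact_out Dv_def)
  next
    case True
    have l: "length x = n" using True by (rule Eset_len)
    have ln: "1 \<le> i" "i + 1 \<le> n" using i by auto
    obtain xs a b ys where x: "x = xs @ a # b # ys" "length xs = i - 1" using split2[OF l ln] by blast
    have i1: "i = length xs + 1" using x i by simp
    have mE: "\<And>a' b'. length (filter id [a',b']) = length (filter id [a,b]) \<Longrightarrow> xs @ a' # b' # ys \<in> Eset n k"
      using True unfolding x(1) by (rule mem_perm2)
    let ?pl = "phi (lowseq n k)"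
    show ?thesis
    proof (cases a; cases b)
      assume "a" "b" then show ?thesis using True x by (simp add: Tact_at[OF i1] Dv_def)
    next
      assume "\<not> a" "\<not> b" then show ?thesis using True x by (simp add: Tact_at[OF i1] Dv_def)
    next
      assume ab: "a" "\<not> b"
      have m2: "xs @ False # True # ys \<in> Eset n k" using mE[of False True] ab by simp
      have "phi (xs @ False # True # ys) \<le> ?pl" using phi_le_low[OF m2] .
      then have p: "?pl - phi (xs @ True # False # ys) = Suc (?pl - phi (xs @ False # True # ys))"
        by (simp add: phi_FT)
      show ?thesis using True x ab m2 p by (simp add: Tact_at[OF i1] Dv_def)
    next
      assume ab: "\<not> a" "b"
      have m2: "xs @ True # False # ys \<in> Eset n k" using mE[of True False] ab by simp
      have "phi (xs @ False # True # ys) \<le> ?pl" using phi_le_low True x ab by simp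
      then have p: "?pl - phi (xs @ True # False # ys) = Suc (?pl - phi (xs @ False # True # ys))"
        by (simp add: phi_FT)
      show ?thesis using True x ab m2 p by (simp add: Tact_at[OF i1] Dv_def algebra_simps)
    qed
  qed
qed

lemma sign_char:
  assumes n: "k \<le> n" and u: "inM n k u"
    and sg: "\<And>i. 1 \<le> i \<Longrightarrow> i \<le> n - 1 \<Longrightarrow> Tact n k i u = (\<lambda>x. - inverse V * u x)"
  shows "u = (\<lambda>x. Dv n k x * u (lowseq n k))"
proof
  fix x
  show "u x = Dv n k x * u (lowseq n k)"
  proof (cases "x \<in> Eset n k")
    case False then show ?thesis using u by (simp add: inM_def Dv_def)
  next
    case True
    show ?thesis using True
    proof (induction "phi (lowseq n k) - phi x" arbitrary: x rule: less_induct)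
      case less
      show ?case
      proof (cases "x = lowseq n k")
        case True then show ?thesis using Dv_low[OF n] by simp
      next
        case False
        then obtain xs ys where x: "x = xs @ True # False # ys" using find_TF less.prems by blast
        let ?x' = "xs @ False # True # ys"
        have m': "?x' \<in> Eset n k" using less.prems unfolding x by (rule mem_perm2) simp
        have ph: "phi ?x' = Suc (phi x)" unfolding x by (simp add: phi_FT)
        have le: "phi ?x' \<le> phi (lowseq n k)" by (rule phi_le_low[OF m'])
        have IH: "u ?x' = Dv n k ?x' * u (lowseq n k)" using less.hyps[OF _ m'] ph le by simp
        have i: "1 \<le> Suc (length xs)" "Suc (length xs) \<le> n - 1" using Eset_len[OF less.prems] x by auto
        have i1: "Suc (length xs) = length xs + 1" by simp
        have "Tact n k (Suc (length xs)) u x = u ?x'"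
          using less.prems unfolding x by (simp add: Tact_at[OF i1])
        then have "u ?x' = - inverse V * u x" using sg[OF i] by (metis)
        then have ux: "u x = - V * u ?x'" by (simp add: field_simps)
        have "Dv n k x = - V * Dv n k ?x'"
        proof -
          have "phi (lowseq n k) - phi x = Suc (phi (lowseq n k) - phi ?x')" using ph le by simp
          then show ?thesis using less.prems m' by (simp add: Dv_def)
        qed
        then show ?thesis using ux IH by simp
      qed
    qed
  qed
qed

lemma Dq_inM: "inM n k u \<Longrightarrow> inM n k (Dq n k m u)"
  by (induct m arbitrary: u) (auto intro!: inM_Rf)
lemma Wq_inM: "inM n k u \<Longrightarrow> inM n k (Wq n k m u)"
  by (induct m arbitrary: u) (auto intro!: Dq_inM inM_Rf)
lemma sig_inM: "inM n k (sig n k m)" by (simp add: inM_def sig_def)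
lemma psi_inM: "inM n k (psi n k m)"
  using Wq_inM[OF sig_inM, of n k "n - 1" m] by (simp add: psi_def psi0_def W_Wq inM_def)

lemma psi_Dv:
  assumes n: "1 \<le> n" "k \<le> n"
  shows "psi n k (Dv n k) = Dv n k"
proof -
  have sg: "Tact n k i (psi n k (Dv n k)) = (\<lambda>x. - inverse V * psi n k (Dv n k) x)" if i: "1 \<le> i" "i \<le> n - 1" for i
  proof -
    have "Rf n k i qq (Dv n k) = (\<lambda>x. (- V) * Dv n k x)"
      using Dv_sign[OF i, of k] by (simp add: Rf_def fun_eq_iff algebra_simps)
    then have "Tact n k i (psi n k (Dv n k)) = psi n k (\<lambda>x. (- V) * Dv n k x)"
      using psi_Rf[OF i, of k "Dv n k"] by simp
    also have "\<dots> = (\<lambda>x. barQ (- V) * psi n k (Dv n k) x)" by (rule psi_scale)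
    finally show ?thesis by (simp add: barQ_minus barQ_V)
  qed
  have e: "psi n k (Dv n k) = (\<lambda>x. Dv n k x * psi n k (Dv n k) (lowseq n k))"
    by (rule sign_char[OF n(2) psi_inM sg])
  have "psi n k (Dv n k) (lowseq n k) = (\<Sum>y\<in>Eset n k. barQ (Dv n k y) * psi n k (basis y) (lowseq n k))"
    by (rule psi_expand[OF inM_Dv])
  also have "\<dots> = barQ (Dv n k (lowseq n k)) * psi n k (basis (lowseq n k)) (lowseq n k)
       + (\<Sum>y\<in>Eset n k - {lowseq n k}. barQ (Dv n k y) * psi n k (basis y) (lowseq n k))"
    using sum.remove[OF finite_E[of n k], of "lowseq n k" "\<lambda>y. barQ (Dv n k y) * psi n k (basis y) (lowseq n k)"] low_E[OF n(2)] by simp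
  also have "(\<Sum>y\<in>Eset n k - {lowseq n k}. barQ (Dv n k y) * psi n k (basis y) (lowseq n k)) = 0"
  proof (rule sum.neutral, rule ballI)
    fix y assume y: "y \<in> Eset n k - {lowseq n k}"
    have "psi n k (basis y) (lowseq n k) = 0"
      using tri[OF n, of y] y phi_le_low[of y n k] by force
    then show "barQ (Dv n k y) * psi n k (basis y) (lowseq n k) = 0" by simp
  qed
  also have "psi n k (basis (lowseq n k)) (lowseq n k) = 1" using tri[OF n low_E[OF n(2)]] by simp
  finally have "psi n k (Dv n k) (lowseq n k) = 1" using Dv_low[OF n(2)] by simp
  then show ?thesis using e by simp
qed

lemma Dv_vZv:
  assumes n: "k \<le> n" and x: "x \<in> Eset n k"
  shows "Dv n k x - basis (lowseq n k) x \<in> vZv"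
proof (cases "x = lowseq n k")
  case True then show ?thesis using Dv_low[OF n] vZv_0 by (simp add: basis_def)
next
  case False
  then obtain xs ys where xx: "x = xs @ True # False # ys" using find_TF x by blast
  have m': "xs @ False # True # ys \<in> Eset n k" using x unfolding xx by (rule mem_perm2) simp
  have "Suc (phi x) \<le> phi (lowseq n k)" using phi_le_low[OF m'] xx by (simp add: phi_FT)
  then have "1 \<le> phi (lowseq n k) - phi x" by simp
  then show ?thesis using False x vZv_pow by (simp add: basis_def Dv_def)
qed

lemma CJ_Dv:
  assumes n: "1 \<le> n" "k \<le> n" and bar: "barM n k (Dv n k) = Dv n k"
  shows "CJ n k (lowseq n k) = Dv n k"
  unfolding CJ_def
proof (rule the_equality)
  show "inM n k (Dv n k) \<and> barM n k (Dv n k) = Dv n k \<and> (\<forall>x\<in>Eset n k. Dv n k x - basis (lowseq n k) x \<in> vZv)"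
    using inM_Dv bar Dv_vZv[OF n(2)] by blast
next
  fix c assume c: "inM n k c \<and> barM n k c = c \<and> (\<forall>x\<in>Eset n k. c x - basis (lowseq n k) x \<in> vZv)"
  obtain h where h: "valid_h n h" "hact n k h (basis (one_seq n k)) = c" using cyc[OF n(2)] c by blast
  have pc: "psi n k c = c" using barM_psi[OF n h(1)] h(2) c by simp
  let ?d = "\<lambda>x. c x - Dv n k x"
  have d1: "inM n k ?d" using c inM_Dv by (simp add: inM_def)
  have d2: "psi n k ?d = ?d" using psi_diff[of n k c "Dv n k"] pc psi_Dv[OF n] by simp
  have d3: "\<forall>x\<in>Eset n k. ?d x \<in> vZv"
  proof
    fix x assume x: "x \<in> Eset n k"
    have "(c x - basis (lowseq n k) x) - (Dv n k x - basis (lowseq n k) x) \<in> vZv"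
      using c x Dv_vZv[OF n(2) x] by (rule_tac vZv_diff) auto
    then show "?d x \<in> vZv" by simp
  qed
  have "?d = (\<lambda>x. 0)" by (rule uniq[OF n d1 d2 d3])
  then show "c = Dv n k" by (simp add: fun_eq_iff)
qed


definition fq :: "nat \<Rightarrow> qv" where "fq r = V ^ r / qint r"

lemma Vpow_ne1: "0 < m \<Longrightarrow> V ^ m \<noteq> 1"
proof
  assume m: "0 < m" and e: "V ^ m = 1"
  have "iota ([:0,1:] ^ m) = iota 1" using e by (simp add: V_iota iota_power iota_1)
  then have "([:0,1::rat:] ^ m) = 1" by (simp add: iota_inj)
  then have "degree ([:0,1::rat:] ^ m) = 0" by simp
  then show False using m by (simp add: degree_power_eq)
qed

lemma V_ne_w: "V - inverse V \<noteq> 0"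
proof
  assume "V - inverse V = 0"
  then have "V * V = 1" by (simp add: field_simps)
  then have "V ^ 2 = 1" by (simp add: power2_eq_square)
  then show False using Vpow_ne1[of 2] by simp
qed

lemma V_ne_w': "V \<noteq> inverse V" using V_ne_w by simp

lemma fq_alt_aux:
  fixes X q :: qv
  assumes "X \<noteq> 0" "X * X \<noteq> 1" "q \<noteq> 0"
  shows "X / ((X - inverse X) / q) = q * (X * X) / (X * X - 1)"
proof -
  have "X - inverse X = (X * X - 1) / X" using assms by (simp add: field_simps)
  then show ?thesis using assms by (simp add: field_simps)
qed

lemma fq_alt: assumes "1 \<le> r" shows "fq r = qq * V ^ (2 * r) / (V ^ (2 * r) - 1)"
proof -
  have sq: "V ^ (2 * r) = V ^ r * V ^ r" by (simp add: mult_2 power_add)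
  have a: "V ^ r * V ^ r \<noteq> 1" using Vpow_ne1[of "2 * r"] assms sq by simp
  have "fq r = V ^ r / ((V ^ r - inverse (V ^ r)) / qq)" by (simp add: fq_def qint_def power_inverse)
  also have "\<dots> = qq * (V ^ r * V ^ r) / (V ^ r * V ^ r - 1)" by (rule fq_alt_aux) (use a V_ne_w in auto)
  finally show ?thesis unfolding sq .
qed

lemma fq_1: "fq 1 = V" using V_ne_w by (simp add: fq_def qint_def)

lemma fq_rel_aux:
  fixes P Q q :: qv
  assumes "P - 1 \<noteq> 0" "Q - 1 \<noteq> 0" "P * Q - 1 \<noteq> 0"
  shows "q * (P * Q) / (P * Q - 1) * (q * P / (P - 1) + q * Q / (Q - 1) - q) = q * P / (P - 1) * (q * Q / (Q - 1))"
proof -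
  have poly: "\<And>A B C. A * (P - 1) = 1 \<Longrightarrow> B * (Q - 1) = 1 \<Longrightarrow> C * (P * Q - 1) = 1 \<Longrightarrow>
      q * (P * Q) * C * (q * P * A + q * Q * B - q) = q * P * A * (q * Q * B)" by algebra
  have "q * (P * Q) * inverse (P * Q - 1) * (q * P * inverse (P - 1) + q * Q * inverse (Q - 1) - q)
      = q * P * inverse (P - 1) * (q * Q * inverse (Q - 1))"
    by (rule poly) (use assms in simp_all)
  then show ?thesis by (simp add: divide_inverse)
qed

lemma fq_rel:
  assumes "1 \<le> x" "1 \<le> y"
  shows "fq (x + y) * (fq x + fq y - qq) = fq x * fq y"
proof -
  define P where "P = V ^ (2 * x)"
  define Q where "Q = V ^ (2 * y)"
  have P1: "P \<noteq> 1" unfolding P_def using Vpow_ne1[of "2 * x"] assms by simp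
  have Q1: "Q \<noteq> 1" unfolding Q_def using Vpow_ne1[of "2 * y"] assms by simp
  have PQ: "V ^ (2 * (x + y)) = P * Q" unfolding P_def Q_def by (simp add: power_add distrib_left)
  have PQ1: "P * Q \<noteq> 1" using Vpow_ne1[of "2 * (x + y)"] assms PQ by simp
  have fx: "fq x = qq * P / (P - 1)" unfolding P_def using fq_alt assms by simp
  have fy: "fq y = qq * Q / (Q - 1)" unfolding Q_def using fq_alt assms by simp
  have fxy: "fq (x + y) = qq * (P * Q) / (P * Q - 1)" using fq_alt[of "x + y"] assms PQ by simp
  have d1: "P - 1 \<noteq> 0" "Q - 1 \<noteq> 0" "P * Q - 1 \<noteq> 0" using P1 Q1 PQ1 by auto
  show ?thesis unfolding fx fy fxy by (rule fq_rel_aux[OF d1])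
qed

lemma ybe_row:
  assumes "1 \<le> g" "g + 2 \<le> n" "1 \<le> a"
  shows "Rf n k (g+1) (fq a) (Rf n k g (fq (a+1)) (Rf n k (g+1) (fq 1) m))
       = Rf n k g (fq 1) (Rf n k (g+1) (fq (a+1)) (Rf n k g (fq a) m))"
proof -
  have rel: "fq (1 + a) * (fq 1 + fq a - qq) = fq 1 * fq a" using fq_rel[of 1 a] assms by simp
  show ?thesis using ybe_gen[of "fq (a+1)" "fq 1" "fq a" g n k m] rel assms by (simp add: add.commute)
qed

lemma ybe_col:
  assumes "1 \<le> h" "h + 2 \<le> n" "1 \<le> b"
  shows "Rf n k h (fq b) (Rf n k (h+1) (fq (b+1)) (Rf n k h (fq 1) m))
       = Rf n k (h+1) (fq 1) (Rf n k h (fq (b+1)) (Rf n k (h+1) (fq b) m))"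
proof -
  have rel: "fq (b + 1) * (fq b + fq 1 - qq) = fq b * fq 1" using fq_rel[of b 1] assms by simp
  show ?thesis using ybe_gen[of "fq (b+1)" "fq b" "fq 1" h n k m] rel assms by simp
qed

lemma Rf1_eigen:
  assumes v: "inM n k v" and g: "1 \<le> g" "g + 1 \<le> n"
  shows "Tact n k g (Rf n k g (fq 1) v) = (\<lambda>x. - inverse V * Rf n k g (fq 1) v x)"
proof
  fix x
  have vw: "V * inverse V = 1" by simp
  show "Tact n k g (Rf n k g (fq 1) v) x = - inverse V * Rf n k g (fq 1) v x"
  proof (cases "x \<in> Eset n k")
    case False then show ?thesis using v by (simp add: Tact_out Rf_def inM_def)
  next
    case True
    obtain xs a b ys where x: "x = xs @ a # b # ys" "length xs = g - 1"
      using split2[OF Eset_len[OF True] g] by blast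
    have i1: "g = length xs + 1" using x g by simp
    have mE: "\<And>a' b'. length (filter id [a',b']) = length (filter id [a,b]) \<Longrightarrow> xs @ a' # b' # ys \<in> Eset n k"
      using True unfolding x(1) by (rule mem_perm2)
    show ?thesis unfolding x(1) Rf_def fq_1
      apply (simp only: Tact_at[OF i1])
      apply (cases a; cases b)
      apply (simp_all add: mE algebra_simps)
      done
  qed
qed


definition opl :: "nat \<Rightarrow> nat \<Rightarrow> (nat \<times> nat) list \<Rightarrow> modM \<Rightarrow> modM" where
  "opl n k ps m = foldr (\<lambda>p u. Rf n k (fst p) (fq (snd p)) u) ps m"

lemma opl_Nil[simp]: "opl n k [] m = m" by (simp add: opl_def)
lemma opl_Cons[simp]: "opl n k (p # ps) m = Rf n k (fst p) (fq (snd p)) (opl n k ps m)" by (simp add: opl_def)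
lemma opl_append: "opl n k (ps @ qs) m = opl n k ps (opl n k qs m)" by (simp add: opl_def)
lemma opl_inM: "inM n k m \<Longrightarrow> inM n k (opl n k ps m)" by (induct ps) (simp_all add: inM_Rf)

definition far :: "nat \<Rightarrow> nat \<Rightarrow> nat \<Rightarrow> bool" where
  "far n g g' \<longleftrightarrow> 1 \<le> g \<and> g + 1 \<le> n \<and> 1 \<le> g' \<and> g' + 1 \<le> n \<and> (g + 2 \<le> g' \<or> g' + 2 \<le> g)"

lemma far_sym: "far n g g' \<Longrightarrow> far n g' g" by (auto simp: far_def)

lemma Rf_comm': "far n g g' \<Longrightarrow> Rf n k g F (Rf n k g' G m) = Rf n k g' G (Rf n k g F m)"
  unfolding far_def using Rf_comm[of g g' n k F G m] Rf_comm[of g' g n k G F m] by auto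

lemma opl_comm1: "(\<forall>p\<in>set ps. far n (fst p) g) \<Longrightarrow> opl n k ps (Rf n k g F m) = Rf n k g F (opl n k ps m)"
  by (induct ps) (simp_all add: Rf_comm')

lemma opl_swap: "(\<forall>p\<in>set P. \<forall>q\<in>set Q. far n (fst p) (fst q)) \<Longrightarrow> opl n k (P @ Q) m = opl n k (Q @ P) m"
proof (induct P arbitrary: m)
  case Nil then show ?case by simp
next
  case (Cons p P)
  have "opl n k ((p # P) @ Q) m = Rf n k (fst p) (fq (snd p)) (opl n k (Q @ P) m)" using Cons by simp
  also have "\<dots> = Rf n k (fst p) (fq (snd p)) (opl n k Q (opl n k P m))" by (simp add: opl_append)
  also have "\<dots> = opl n k Q (Rf n k (fst p) (fq (snd p)) (opl n k P m))"
    using Cons.prems by (intro opl_comm1[symmetric]) (auto intro: far_sym)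
  finally show ?case by (simp add: opl_append)
qed

lemma push_row:
  assumes L: "\<forall>p\<in>set L. h + 1 \<le> fst p \<and> fst p + 1 \<le> n" and R: "\<forall>p\<in>set Rt. 1 \<le> fst p \<and> fst p + 2 \<le> h"
    and h: "2 \<le> h" "h + 1 \<le> n" and a: "1 \<le> a"
  shows "opl n k (L @ [(h, a), (h - 1, a + 1)] @ Rt) (Rf n k h (fq 1) m)
       = Rf n k (h - 1) (fq 1) (opl n k (L @ [(h, a + 1), (h - 1, a)] @ Rt) m)"
proof -
  have c1: "opl n k Rt (Rf n k h (fq 1) m) = Rf n k h (fq 1) (opl n k Rt m)"
    using R h by (intro opl_comm1) (auto simp: far_def)
  have y: "Rf n k h (fq a) (Rf n k (h - 1) (fq (a + 1)) (Rf n k h (fq 1) u))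
         = Rf n k (h - 1) (fq 1) (Rf n k h (fq (a + 1)) (Rf n k (h - 1) (fq a) u))" for u
    using ybe_row[of "h - 1" n a k u] h a by simp
  have c2: "opl n k L (Rf n k (h - 1) (fq 1) u) = Rf n k (h - 1) (fq 1) (opl n k L u)" for u
    using L h by (intro opl_comm1) (auto simp: far_def)
  have "opl n k (L @ [(h, a), (h - 1, a + 1)] @ Rt) (Rf n k h (fq 1) m)
      = opl n k L (Rf n k h (fq a) (Rf n k (h - 1) (fq (a + 1)) (opl n k Rt (Rf n k h (fq 1) m))))"
    by (simp only: opl_append opl_Cons opl_Nil fst_conv snd_conv)
  also have "\<dots> = opl n k L (Rf n k h (fq a) (Rf n k (h - 1) (fq (a + 1)) (Rf n k h (fq 1) (opl n k Rt m))))"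
    by (simp only: c1)
  also have "\<dots> = opl n k L (Rf n k (h - 1) (fq 1) (Rf n k h (fq (a + 1)) (Rf n k (h - 1) (fq a) (opl n k Rt m))))"
    by (simp only: y)
  also have "\<dots> = Rf n k (h - 1) (fq 1) (opl n k L (Rf n k h (fq (a + 1)) (Rf n k (h - 1) (fq a) (opl n k Rt m))))"
    by (simp only: c2)
  also have "\<dots> = Rf n k (h - 1) (fq 1) (opl n k (L @ [(h, a + 1), (h - 1, a)] @ Rt) m)"
    by (simp only: opl_append opl_Cons opl_Nil fst_conv snd_conv)
  finally show ?thesis .
qed

lemma push_col:
  assumes L: "\<forall>p\<in>set L. 1 \<le> fst p \<and> fst p + 1 \<le> h" and R: "\<forall>p\<in>set Rt. h + 2 \<le> fst p \<and> fst p + 1 \<le> n"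
    and h: "1 \<le> h" "h + 2 \<le> n" and b: "1 \<le> b"
  shows "opl n k (L @ [(h, b), (h + 1, b + 1)] @ Rt) (Rf n k h (fq 1) m)
       = Rf n k (h + 1) (fq 1) (opl n k (L @ [(h, b + 1), (h + 1, b)] @ Rt) m)"
proof -
  have c1: "opl n k Rt (Rf n k h (fq 1) m) = Rf n k h (fq 1) (opl n k Rt m)"
    using R h by (intro opl_comm1) (auto simp: far_def)
  have y: "Rf n k h (fq b) (Rf n k (h + 1) (fq (b + 1)) (Rf n k h (fq 1) u))
         = Rf n k (h + 1) (fq 1) (Rf n k h (fq (b + 1)) (Rf n k (h + 1) (fq b) u))" for u
    using ybe_col[of h n b k u] h b by simp
  have c2: "opl n k L (Rf n k (h + 1) (fq 1) u) = Rf n k (h + 1) (fq 1) (opl n k L u)" for u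
    using L h by (intro opl_comm1) (auto simp: far_def)
  have "opl n k (L @ [(h, b), (h + 1, b + 1)] @ Rt) (Rf n k h (fq 1) m)
      = opl n k L (Rf n k h (fq b) (Rf n k (h + 1) (fq (b + 1)) (opl n k Rt (Rf n k h (fq 1) m))))"
    by (simp only: opl_append opl_Cons opl_Nil fst_conv snd_conv)
  also have "\<dots> = opl n k L (Rf n k h (fq b) (Rf n k (h + 1) (fq (b + 1)) (Rf n k h (fq 1) (opl n k Rt m))))"
    by (simp only: c1)
  also have "\<dots> = opl n k L (Rf n k (h + 1) (fq 1) (Rf n k h (fq (b + 1)) (Rf n k (h + 1) (fq b) (opl n k Rt m))))"
    by (simp only: y)
  also have "\<dots> = Rf n k (h + 1) (fq 1) (opl n k L (Rf n k h (fq (b + 1)) (Rf n k (h + 1) (fq b) (opl n k Rt m))))"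
    by (simp only: c2)
  also have "\<dots> = Rf n k (h + 1) (fq 1) (opl n k (L @ [(h, b + 1), (h + 1, b)] @ Rt) m)"
    by (simp only: opl_append opl_Cons opl_Nil fst_conv snd_conv)
  finally show ?thesis .
qed

lemma interleave:
  assumes "sorted_wrt (>) js"
    and cm: "\<And>j j' q. j \<in> set js \<Longrightarrow> j' \<in> set js \<Longrightarrow> j < j' \<Longrightarrow> q \<in> set (B j') \<Longrightarrow> far n (fst (A j)) (fst q)"
  shows "opl n k (map A js @ concat (map B js)) m = opl n k (concat (map (\<lambda>j. A j # B j) js)) m"
  using assms
proof (induct js arbitrary: m)
  case Nil then show ?case by simp
next
  case (Cons j js)
  let ?rest = "concat (map B js)"
  have sw: "opl n k (map A js @ B j) u = opl n k (B j @ map A js) u" for u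
  proof (rule opl_swap, intro ballI)
    fix p q assume p: "p \<in> set (map A js)" and q: "q \<in> set (B j)"
    then obtain j'' where j'': "j'' \<in> set js" "p = A j''" by auto
    have "j'' < j" using Cons.prems(1) j'' by simp
    then show "far n (fst p) (fst q)" using Cons.prems(2)[of j'' j q] j'' q by simp
  qed
  have sw': "opl n k (map A js) (opl n k (B j) u) = opl n k (B j) (opl n k (map A js) u)" for u
    using sw[of u] by (simp add: opl_append)
  have "opl n k (map A (j # js) @ concat (map B (j # js))) m
      = Rf n k (fst (A j)) (fq (snd (A j))) (opl n k (map A js) (opl n k (B j) (opl n k ?rest m)))"
    by (simp add: opl_append)
  also have "\<dots> = Rf n k (fst (A j)) (fq (snd (A j))) (opl n k (B j) (opl n k (map A js) (opl n k ?rest m)))"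
    by (simp only: sw')
  also have "opl n k (map A js) (opl n k ?rest m) = opl n k (concat (map (\<lambda>j. A j # B j) js)) m"
  proof -
    have s1: "sorted_wrt (>) js" using Cons.prems(1) by simp
    have c1: "\<And>j j' q. j \<in> set js \<Longrightarrow> j' \<in> set js \<Longrightarrow> j < j' \<Longrightarrow> q \<in> set (B j') \<Longrightarrow> far n (fst (A j)) (fst q)"
      by (rule Cons.prems(2)) simp_all
    show ?thesis using Cons.hyps[OF s1 c1] by (simp add: opl_append)
  qed
  finally show ?case by (simp add: opl_append)
qed

definition Eb :: "nat \<Rightarrow> nat \<Rightarrow> nat \<Rightarrow> nat \<Rightarrow> nat \<times> nat" where
  "Eb n k i j = (k + j - i, (k - i) + (n - k - j) + 1)"
definition rowL :: "nat \<Rightarrow> nat \<Rightarrow> nat \<Rightarrow> (nat \<times> nat) list" where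
  "rowL n k i = map (\<lambda>j. Eb n k i j) (rev [1..<n - k + 1])"
definition colL :: "nat \<Rightarrow> nat \<Rightarrow> nat \<Rightarrow> (nat \<times> nat) list" where
  "colL n k j = map (\<lambda>i. Eb n k i j) (rev [1..<k + 1])"
definition XL :: "nat \<Rightarrow> nat \<Rightarrow> (nat \<times> nat) list" where
  "XL n k = concat (map (rowL n k) (rev [1..<k + 1]))"
definition XC :: "nat \<Rightarrow> nat \<Rightarrow> (nat \<times> nat) list" where
  "XC n k = concat (map (colL n k) (rev [1..<n - k + 1]))"

lemma concat_map_Nil[simp]: "concat (map (\<lambda>j. []) xs) = []" by (induct xs) simp_all

lemma XL_XC_aux:
  assumes "k \<le> n"
  shows "t \<le> k \<Longrightarrow> opl n k (concat (map (rowL n k) (rev [1..<t + 1]))) m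
        = opl n k (concat (map (\<lambda>j. map (\<lambda>i. Eb n k i j) (rev [1..<t + 1])) (rev [1..<n - k + 1]))) m"
proof (induct t arbitrary: m)
  case 0 then show ?case by simp
next
  case (Suc t)
  let ?js = "rev [1..<n - k + 1]"
  let ?A = "\<lambda>j. Eb n k (Suc t) j"
  let ?B = "\<lambda>j. map (\<lambda>i. Eb n k i j) (rev [1..<t + 1])"
  have "opl n k (concat (map (rowL n k) (rev [1..<Suc t + 1]))) m
      = opl n k (map ?A ?js) (opl n k (concat (map (rowL n k) (rev [1..<t + 1]))) m)"
    by (simp add: opl_append rowL_def)
  also have "\<dots> = opl n k (map ?A ?js) (opl n k (concat (map ?B ?js)) m)" using Suc by simp
  also have "\<dots> = opl n k (map ?A ?js @ concat (map ?B ?js)) m" by (simp add: opl_append)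
  also have "\<dots> = opl n k (concat (map (\<lambda>j. ?A j # ?B j) ?js)) m"
  proof (rule interleave)
    show "sorted_wrt (>) ?js" by (simp add: sorted_wrt_rev sorted_wrt_upt del: upt_Suc)
  next
    fix j j' q assume j: "j \<in> set ?js" "j' \<in> set ?js" "j < j'" and q: "q \<in> set (?B j')"
    have "q \<in> (\<lambda>i. Eb n k i j') ` set (rev [1..<t + 1])" using q by simp
    then obtain i where i0: "i \<in> set (rev [1..<t + 1])" "q = Eb n k i j'" by blast
    then have i: "i \<in> {1..<t+1}" "q = Eb n k i j'" by auto
    show "far n (fst (?A j)) (fst q)" using i j Suc.prems assms by (auto simp: far_def Eb_def)
  qed
  also have "concat (map (\<lambda>j. ?A j # ?B j) ?js) = concat (map (\<lambda>j. map (\<lambda>i. Eb n k i j) (rev [1..<Suc t + 1])) ?js)"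
    by simp
  finally show ?case .
qed

lemma XL_XC: assumes "k \<le> n" shows "opl n k (XL n k) m = opl n k (XC n k) m"
  using XL_XC_aux[OF assms le_refl, of m] unfolding XL_def XC_def colL_def .

lemma rev_upt_split:
  assumes "2 \<le> j0" "j0 \<le> N"
  shows "rev [1..<N + 1] = rev [Suc j0..<N + 1] @ j0 # (j0 - 1) # rev [1..<j0 - 1]"
proof -
  have "[1..<N + 1] = [1..<j0 - 1] @ [j0 - 1..<N + 1]"
    using upt_add_eq_append[of 1 "j0 - 1" "N + 2 - j0"] assms by (simp del: upt_Suc)
  also have "[j0 - 1..<N + 1] = (j0 - 1) # j0 # [Suc j0..<N + 1]" using assms
    by (simp add: upt_conv_Cons del: upt_Suc)
  finally show ?thesis by simp
qed


lemma row_split: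
  assumes "2 \<le> j0" "j0 \<le> n - k"
  shows "rowL n k i = map (Eb n k i) (rev [Suc j0..<n - k + 1]) @ Eb n k i j0 # Eb n k i (j0 - 1) # map (Eb n k i) (rev [1..<j0 - 1])"
  unfolding rowL_def rev_upt_split[OF assms] by simp

lemma col_split:
  assumes "2 \<le> i0" "i0 \<le> k"
  shows "colL n k j = map (\<lambda>i. Eb n k i j) (rev [Suc i0..<k + 1]) @ Eb n k i0 j # Eb n k (i0 - 1) j # map (\<lambda>i. Eb n k i j) (rev [1..<i0 - 1])"
  unfolding colL_def rev_upt_split[OF assms] by simp

lemma row_push:
  assumes i: "1 \<le> i" "i \<le> k" and j0: "2 \<le> j0" "j0 \<le> n - k"
  shows "\<exists>ps. opl n k (rowL n k i) (Rf n k (k + j0 - i) (fq 1) m) = Rf n k (k + j0 - i - 1) (fq 1) (opl n k ps m)"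
proof -
  let ?h = "k + j0 - i" and ?a = "(k - i) + (n - k - j0) + 1"
  let ?L = "map (Eb n k i) (rev [Suc j0..<n - k + 1])" and ?R = "map (Eb n k i) (rev [1..<j0 - 1])"
  have e1: "Eb n k i j0 = (?h, ?a)" by (simp add: Eb_def)
  have e2: "Eb n k i (j0 - 1) = (?h - 1, ?a + 1)" using i j0 by (simp add: Eb_def)
  have r: "rowL n k i = ?L @ [(?h, ?a), (?h - 1, ?a + 1)] @ ?R"
    using row_split[OF j0, of i] e1 e2 by simp
  have L: "\<forall>p\<in>set ?L. ?h + 1 \<le> fst p \<and> fst p + 1 \<le> n" using i j0 by (auto simp: Eb_def)
  have R: "\<forall>p\<in>set ?R. 1 \<le> fst p \<and> fst p + 2 \<le> ?h" using i j0 by (auto simp: Eb_def)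
  have h: "2 \<le> ?h" "?h + 1 \<le> n" using i j0 by auto
  have a: "1 \<le> ?a" by simp
  have "opl n k (?L @ [(?h, ?a), (?h - 1, ?a + 1)] @ ?R) (Rf n k ?h (fq 1) m)
      = Rf n k (?h - 1) (fq 1) (opl n k (?L @ [(?h, ?a + 1), (?h - 1, ?a)] @ ?R) m)"
    by (rule push_row[OF L R h a])
  then show ?thesis unfolding r by blast
qed

lemma col_push:
  assumes j: "1 \<le> j" "j \<le> n - k" and i0: "2 \<le> i0" "i0 \<le> k"
  shows "\<exists>ps. opl n k (colL n k j) (Rf n k (k + j - i0) (fq 1) m) = Rf n k (k + j - i0 + 1) (fq 1) (opl n k ps m)"
proof -
  let ?h = "k + j - i0" and ?b = "(k - i0) + (n - k - j) + 1"
  let ?L = "map (\<lambda>i. Eb n k i j) (rev [Suc i0..<k + 1])" and ?R = "map (\<lambda>i. Eb n k i j) (rev [1..<i0 - 1])"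
  have e1: "Eb n k i0 j = (?h, ?b)" by (simp add: Eb_def)
  have e2: "Eb n k (i0 - 1) j = (?h + 1, ?b + 1)" using i0 j by (simp add: Eb_def Suc_diff_le)
  have r: "colL n k j = ?L @ [(?h, ?b), (?h + 1, ?b + 1)] @ ?R"
    using col_split[OF i0, of n j] e1 e2 by simp
  have L: "\<forall>p\<in>set ?L. 1 \<le> fst p \<and> fst p + 1 \<le> ?h" using i0 j by (auto simp: Eb_def)
  have R: "\<forall>p\<in>set ?R. ?h + 2 \<le> fst p \<and> fst p + 1 \<le> n" using i0 j by (auto simp: Eb_def)
  have h: "1 \<le> ?h" "?h + 2 \<le> n" using i0 j by auto
  have b: "1 \<le> ?b" by simp
  have "opl n k (?L @ [(?h, ?b), (?h + 1, ?b + 1)] @ ?R) (Rf n k ?h (fq 1) m)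
      = Rf n k (?h + 1) (fq 1) (opl n k (?L @ [(?h, ?b + 1), (?h + 1, ?b)] @ ?R) m)"
    by (rule push_col[OF L R h b])
  then show ?thesis unfolding r by blast
qed

lemma rows_push:
  assumes c: "1 \<le> c" "c + 1 \<le> n - k"
  shows "t \<le> k \<Longrightarrow> \<exists>ps. opl n k (concat (map (rowL n k) (rev [1..<t + 1]))) (Rf n k (k + c) (fq 1) m) = Rf n k (k + c - t) (fq 1) (opl n k ps m)"
proof (induct t arbitrary: m)
  case 0 then show ?case by (intro exI[of _ "[]"]) simp
next
  case (Suc t)
  obtain ps where ps: "opl n k (concat (map (rowL n k) (rev [1..<t + 1]))) (Rf n k (k + c) (fq 1) m) = Rf n k (k + c - t) (fq 1) (opl n k ps m)"
    using Suc by auto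
  have hh: "k + (c + 1) - (t + 1) = k + c - t" using Suc.prems by simp
  obtain ps' where ps': "opl n k (rowL n k (t + 1)) (Rf n k (k + (c + 1) - (t + 1)) (fq 1) (opl n k ps m))
      = Rf n k (k + (c + 1) - (t + 1) - 1) (fq 1) (opl n k ps' (opl n k ps m))"
    using row_push[of "t + 1" k "c + 1" n "opl n k ps m"] Suc.prems c by auto
  have "opl n k (concat (map (rowL n k) (rev [1..<Suc t + 1]))) (Rf n k (k + c) (fq 1) m)
      = opl n k (rowL n k (t + 1)) (Rf n k (k + c - t) (fq 1) (opl n k ps m))"
    using ps by (simp add: opl_append)
  also have "\<dots> = Rf n k (k + c - Suc t) (fq 1) (opl n k (ps' @ ps) m)"
    using ps' hh by (simp add: opl_append)
  finally show ?case by blast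
qed

lemma cols_push:
  assumes c: "1 \<le> c" "c + 1 \<le> k"
  shows "t \<le> n - k \<Longrightarrow> \<exists>ps. opl n k (concat (map (colL n k) (rev [1..<t + 1]))) (Rf n k (k - c) (fq 1) m) = Rf n k (k - c + t) (fq 1) (opl n k ps m)"
proof (induct t arbitrary: m)
  case 0 then show ?case by (intro exI[of _ "[]"]) simp
next
  case (Suc t)
  obtain ps where ps: "opl n k (concat (map (colL n k) (rev [1..<t + 1]))) (Rf n k (k - c) (fq 1) m) = Rf n k (k - c + t) (fq 1) (opl n k ps m)"
    using Suc by auto
  have hh: "k + (t + 1) - (c + 1) = k - c + t" using c by simp
  obtain ps' where ps': "opl n k (colL n k (t + 1)) (Rf n k (k + (t + 1) - (c + 1)) (fq 1) (opl n k ps m))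
      = Rf n k (k + (t + 1) - (c + 1) + 1) (fq 1) (opl n k ps' (opl n k ps m))"
    using col_push[of "t + 1" n k "c + 1" "opl n k ps m"] Suc.prems c by auto
  have "opl n k (concat (map (colL n k) (rev [1..<Suc t + 1]))) (Rf n k (k - c) (fq 1) m)
      = opl n k (colL n k (t + 1)) (Rf n k (k - c + t) (fq 1) (opl n k ps m))"
    using ps by (simp add: opl_append)
  also have "\<dots> = Rf n k (k - c + Suc t) (fq 1) (opl n k (ps' @ ps) m)"
    using ps' hh by (simp add: opl_append)
  finally show ?case by blast
qed

lemma rep3: "replicate (a + Suc (Suc b)) x = replicate a x @ x # x # replicate b x"
  by (induct a) auto

lemma wV_ne: "- inverse V - V \<noteq> 0"
proof
  assume "- inverse V - V = 0"
  then have "V * V = - 1" by (simp add: field_simps)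
  then have "iota ([:0,1:] * [:0,1:]) = iota (- 1)" by (simp add: V_iota iota_mult[symmetric] iota_minus iota_1)
  then have "[:0,1::rat:] * [:0,1:] = - 1" by (simp add: iota_inj)
  then have "degree ([:0,1::rat:] * [:0,1:]) = 0" by simp
  then show False by (simp add: degree_mult_eq)
qed

lemma one_pre:
  assumes "k \<le> n" "1 \<le> h" "h + 1 \<le> n" and that: "h + 1 \<le> k \<or> k + 1 \<le> h"
  shows "\<exists>xs c ys. one_seq n k = xs @ c # c # ys \<and> Suc (length xs) = h"
proof (cases "h + 1 \<le> k")
  case True
  have "k = (h - 1) + Suc (Suc (k - h - 1))" using True assms by simp
  then have "replicate k True = replicate (h - 1) True @ True # True # replicate (k - h - 1) True"
    by (metis rep3)
  then show ?thesis using assms by (intro exI[of _ "replicate (h - 1) True"]) (auto simp: one_seq_def)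
next
  case False
  then have kh: "k + 1 \<le> h" using that by simp
  have "n - k = (h - 1 - k) + Suc (Suc (n - k - (h - 1 - k) - 2))" using kh assms by simp
  then have "replicate (n - k) False = replicate (h - 1 - k) False @ False # False # replicate (n - k - (h - 1 - k) - 2) False"
    by (metis rep3)
  then show ?thesis using assms kh
    by (intro exI[of _ "replicate k True @ replicate (h - 1 - k) False"]) (auto simp: one_seq_def)
qed

lemma fq_Suc0: "fq (Suc 0) = V" using fq_1 by simp

lemma one_eig:
  assumes "k \<le> n" "1 \<le> h" "h + 1 \<le> n" "h + 1 \<le> k \<or> k + 1 \<le> h"
  shows "basis (one_seq n k) = Rf n k h (fq 1) (\<lambda>x. inverse (- inverse V - V) * basis (one_seq n k) x)"
proof -
  obtain xs c ys where o: "one_seq n k = xs @ c # c # ys" "Suc (length xs) = h" using one_pre[OF assms] by blast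
  have m: "xs @ c # c # ys \<in> Eset n k" using one_E[OF assms(1)] o by simp
  have "Rf n k h (fq 1) (basis (one_seq n k)) = (\<lambda>x. (- inverse V - V) * basis (one_seq n k) x)"
    using Rf_basis_same[OF m, of "fq 1"] o by (simp add: fq_Suc0)
  then have R: "Rf n k h (fq 1) (\<lambda>x. inverse (- inverse V - V) * basis (one_seq n k) x)
     = (\<lambda>x. inverse (- inverse V - V) * ((- inverse V - V) * basis (one_seq n k) x))"
    by (simp add: Rf_scale)
  have c: "inverse (- inverse V - V) * (- inverse V - V) = 1" using wV_ne by (rule left_inverse)
  show ?thesis unfolding R by (rule ext) (simp add: mult.assoc[symmetric] c)
qed

lemma XL_first:
  assumes "1 \<le> k" "k + 1 \<le> n"
  shows "\<exists>ps. XL n k = (n - k, 1) # ps"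
proof -
  have r: "rev [1..<k + 1] = k # rev [1..<k]" using assms by simp
  have r2: "rev [1..<n - k + 1] = (n - k) # rev [1..<n - k]" using assms by simp
  have "Eb n k k (n - k) = (n - k, 1)" using assms by (simp add: Eb_def)
  then show ?thesis unfolding XL_def r rowL_def r2 by simp
qed

lemma X_sign:
  assumes k: "1 \<le> k" "k + 1 \<le> n" and g: "1 \<le> g" "g \<le> n - 1"
  shows "Tact n k g (opl n k (XL n k) (basis (one_seq n k))) = (\<lambda>x. - inverse V * opl n k (XL n k) (basis (one_seq n k)) x)"
proof -
  let ?one = "basis (one_seq n k)"
  let ?v = "\<lambda>x. inverse (- inverse V - V) * ?one x"
  have oneM: "inM n k ?one" using one_E[of k n] k by (auto simp: inM_def basis_def)
  have vM: "inM n k ?v" using oneM by (simp add: inM_def)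
  have g1: "g + 1 \<le> n" using g by simp
  have "\<exists>u. inM n k u \<and> opl n k (XL n k) ?one = Rf n k g (fq 1) u"
  proof (cases "g = n - k")
    case True
    obtain ps where "XL n k = (n - k, 1) # ps" using XL_first[OF k] by blast
    then show ?thesis using True opl_inM[OF oneM, of ps]
      by (intro exI[of _ "opl n k ps ?one"]) simp
  next
    case False
    show ?thesis
    proof (cases "g < n - k")
      case True
      have e: "?one = Rf n k (k + g) (fq 1) ?v" using k g True by (intro one_eig) auto
      obtain ps where ps: "opl n k (concat (map (rowL n k) (rev [1..<k + 1]))) (Rf n k (k + g) (fq 1) ?v) = Rf n k (k + g - k) (fq 1) (opl n k ps ?v)"
        using rows_push[of g n k k ?v] True g by auto
      show ?thesis using ps e vM by (intro exI[of _ "opl n k ps ?v"]) (simp add: XL_def opl_inM)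
    next
      case False
      then have gt: "n - k < g" using \<open>g \<noteq> n - k\<close> by simp
      let ?c = "n - g"
      have c: "1 \<le> ?c" "?c + 1 \<le> k" using g gt k by auto
      have e: "?one = Rf n k (k - ?c) (fq 1) ?v" using k g c by (intro one_eig) auto
      obtain ps where ps: "opl n k (concat (map (colL n k) (rev [1..<n - k + 1]))) (Rf n k (k - ?c) (fq 1) ?v) = Rf n k (k - ?c + (n - k)) (fq 1) (opl n k ps ?v)"
        using cols_push[OF c, of "n - k" n ?v] by auto
      have gg: "k - ?c + (n - k) = g" using c g k by simp
      have "opl n k (XL n k) ?one = opl n k (XC n k) ?one" using XL_XC k by simp
      then show ?thesis using ps e vM gg by (intro exI[of _ "opl n k ps ?v"]) (simp add: XC_def opl_inM)
    qed
  qed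
  then obtain u where u: "inM n k u" "opl n k (XL n k) ?one = Rf n k g (fq 1) u" by blast
  show ?thesis unfolding u(2) using Rf1_eigen[OF u(1) g(1) g1] .
qed


definition topc :: "modM \<Rightarrow> nat \<Rightarrow> bool list \<Rightarrow> bool" where
  "topc u L e \<longleftrightarrow> phi e = L \<and> u e = 1 \<and> (\<forall>x. u x \<noteq> 0 \<longrightarrow> phi x \<le> L) \<and> (\<forall>x. phi x = L \<longrightarrow> x \<noteq> e \<longrightarrow> u x = 0)"

lemma topc_step:
  assumes t: "topc u L (xs @ True # False # ys)" and e: "xs @ True # False # ys \<in> Eset n k"
  shows "topc (Rf n k (Suc (length xs)) F u) (Suc L) (xs @ False # True # ys)"
proof -
  let ?e = "xs @ True # False # ys" and ?e' = "xs @ False # True # ys"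
  let ?i = "Suc (length xs)"
  have m': "?e' \<in> Eset n k" using e by (rule mem_perm2) simp
  have ph: "phi ?e' = Suc L" using t by (simp add: topc_def phi_FT)
  have t1: "u ?e = 1" and t2: "\<And>x. u x \<noteq> 0 \<Longrightarrow> phi x \<le> L" and t3: "\<And>x. phi x = L \<Longrightarrow> x \<noteq> ?e \<Longrightarrow> u x = 0"
    using t by (auto simp: topc_def)
  have u0: "\<And>x. L < phi x \<Longrightarrow> u x = 0" using t2 by (meson not_le)
  have i1: "?i = length xs + 1" by simp
  have ln: "1 \<le> ?i" "?i + 1 \<le> n" using Eset_len[OF e] by auto
  have decomp: "\<exists>xs' a b ys'. x = xs' @ a # b # ys' \<and> length xs' = length xs" if "x \<in> Eset n k" for x
    using split2[OF Eset_len[OF that] ln] by auto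
  have v1: "Rf n k ?i F u ?e' = 1"
    using m' t1 u0[of ?e'] ph by (simp add: Rf_def Tact_at[OF i1])
  have v2: "phi x \<le> Suc L" if nz: "Rf n k ?i F u x \<noteq> 0" for x
  proof (cases "x \<in> Eset n k")
    case False then show ?thesis using nz t2[of x] by (auto simp: Rf_def Tact_out)
  next
    case True
    then obtain xs' a b ys' where x: "x = xs' @ a # b # ys'" "length xs' = length xs" using decomp by blast
    have i2: "?i = length xs' + 1" using x by simp
    have nz': "Rf n k ?i F u (xs' @ a # b # ys') \<noteq> 0" using nz x by simp
    show ?thesis
    proof (cases a; cases b)
      assume "a" "b"
      then have "u x \<noteq> 0" using nz' True x by (auto simp: Rf_def Tact_at[OF i2])
      then show ?thesis using t2[of x] by simp
    next
      assume "\<not> a" "\<not> b"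
      then have "u x \<noteq> 0" using nz' True x by (auto simp: Rf_def Tact_at[OF i2])
      then show ?thesis using t2[of x] by simp
    next
      assume ab: "a" "\<not> b"
      then have "u (xs' @ False # True # ys') \<noteq> 0 \<or> u x \<noteq> 0" using nz' True x by (auto simp: Rf_def Tact_at[OF i2])
      then show ?thesis using t2[of "xs' @ False # True # ys'"] t2[of x] x ab by (auto simp: phi_FT)
    next
      assume ab: "\<not> a" "b"
      then have "u (xs' @ True # False # ys') \<noteq> 0 \<or> u x \<noteq> 0" using nz' True x by (auto simp: Rf_def Tact_at[OF i2])
      then show ?thesis using t2[of "xs' @ True # False # ys'"] t2[of x] x ab by (auto simp: phi_FT)
    qed
  qed
  have v3: "Rf n k ?i F u x = 0" if px: "phi x = Suc L" and ne: "x \<noteq> ?e'" for x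
  proof (cases "x \<in> Eset n k")
    case False then show ?thesis using u0[of x] px by (simp add: Rf_def Tact_out)
  next
    case True
    then obtain xs' a b ys' where x: "x = xs' @ a # b # ys'" "length xs' = length xs" using decomp by blast
    have i2: "?i = length xs' + 1" using x by simp
    have ux: "u x = 0" using u0[of x] px by simp
    show ?thesis
    proof (cases a; cases b)
      assume "a" "b" then show ?thesis using True x ux by (simp add: Rf_def Tact_at[OF i2])
    next
      assume "\<not> a" "\<not> b" then show ?thesis using True x ux by (simp add: Rf_def Tact_at[OF i2])
    next
      assume ab: "a" "\<not> b"
      have "phi (xs' @ False # True # ys') = Suc (Suc L)" using px x ab by (simp add: phi_FT)
      then have "u (xs' @ False # True # ys') = 0" using u0 by simp
      then show ?thesis using True x ux ab by (simp add: Rf_def Tact_at[OF i2])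
    next
      assume ab: "\<not> a" "b"
      have p: "phi (xs' @ True # False # ys') = L" using px x ab by (simp add: phi_FT)
      have "xs' @ True # False # ys' \<noteq> ?e"
      proof
        assume "xs' @ True # False # ys' = ?e"
        then have "xs' = xs" "ys' = ys" using x by auto
        then show False using ne x ab by simp
      qed
      then have "u (xs' @ True # False # ys') = 0" using t3 p by blast
      then show ?thesis using True x ux ab by (simp add: Rf_def Tact_at[OF i2])
    qed
  qed
  show ?thesis unfolding topc_def using ph v1 v2 v3 by blast
qed

definition st :: "nat \<Rightarrow> nat \<Rightarrow> nat \<Rightarrow> nat \<Rightarrow> bool list" where
  "st n k i j = replicate (k - i) True @ replicate j False @ True # replicate (n - k - j) False @ replicate (i - 1) True"

definition Zs :: "nat \<Rightarrow> nat \<Rightarrow> nat \<Rightarrow> bool list" where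
  "Zs n k t = replicate (k - t) True @ replicate (n - k) False @ replicate t True"

lemma st_E: "1 \<le> i \<Longrightarrow> i \<le> k \<Longrightarrow> j \<le> n - k \<Longrightarrow> k \<le> n \<Longrightarrow> st n k i j \<in> Eset n k"
  by (simp add: st_def Eset_def)

lemma st_split: "j + 1 \<le> n - k \<Longrightarrow> st n k i j = (replicate (k - i) True @ replicate j False) @ True # False # (replicate (n - k - j - 1) False @ replicate (i - 1) True)"
proof -
  assume a: "j + 1 \<le> n - k"
  have "n - k - j = Suc (n - k - j - 1)" using a by simp
  then show ?thesis by (simp add: st_def)
qed

lemma st_next: "j + 1 \<le> n - k \<Longrightarrow> (replicate (k - i) True @ replicate j False) @ False # True # (replicate (n - k - j - 1) False @ replicate (i - 1) True) = st n k i (j + 1)"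
proof -
  assume a: "j + 1 \<le> n - k"
  have "n - k - (j + 1) = n - k - j - 1" by simp
  then show ?thesis by (simp add: st_def rep_snoc replicate_append_same)
qed

lemma st0: assumes "1 \<le> i" "i \<le> k" shows "st n k i 0 = Zs n k (i - 1)"
proof -
  have e: "k - (i - 1) = Suc (k - i)" using assms by simp
  have r: "replicate (k - (i - 1)) True @ l = replicate (k - i) True @ True # l" for l by (simp only: e rep_snoc)
  show ?thesis unfolding st_def Zs_def r by simp
qed

lemma stN: "1 \<le> i \<Longrightarrow> i \<le> k \<Longrightarrow> st n k i (n - k) = Zs n k i"
proof -
  assume a: "1 \<le> i" "i \<le> k"
  have "replicate i True = True # replicate (i - 1) True" using a by (cases i) auto
  then show ?thesis by (simp add: st_def Zs_def)
qed

lemma row_topc: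
  assumes i: "1 \<le> i" "i \<le> k" and kn: "k \<le> n"
  shows "j \<le> n - k \<Longrightarrow> topc u L (st n k i 0) \<Longrightarrow> topc (opl n k (map (Eb n k i) (rev [1..<j + 1])) u) (L + j) (st n k i j)"
proof (induct j)
  case 0 then show ?case by simp
next
  case (Suc j)
  have j: "j + 1 \<le> n - k" using Suc.prems by simp
  have IH: "topc (opl n k (map (Eb n k i) (rev [1..<j + 1])) u) (L + j) (st n k i j)" using Suc by simp
  let ?xs = "replicate (k - i) True @ replicate j False"
  have mem: "st n k i j \<in> Eset n k" using st_E i kn j by simp
  have T: "topc (Rf n k (Suc (length ?xs)) (fq (snd (Eb n k i (Suc j)))) (opl n k (map (Eb n k i) (rev [1..<j + 1])) u))
      (Suc (L + j)) (?xs @ False # True # (replicate (n - k - j - 1) False @ replicate (i - 1) True))"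
    using topc_step[OF IH[unfolded st_split[OF j]] mem[unfolded st_split[OF j]]] .
  have g: "fst (Eb n k i (Suc j)) = Suc (length ?xs)" using i by (simp add: Eb_def)
  show ?case using T unfolding st_next[OF j] by (simp add: g)
qed

lemma rows_topc:
  assumes k: "1 \<le> k" "k \<le> n"
  shows "t \<le> k \<Longrightarrow> topc (opl n k (concat (map (rowL n k) (rev [1..<t + 1]))) (basis (one_seq n k))) (phi (one_seq n k) + t * (n - k)) (Zs n k t)"
proof (induct t)
  case 0
  have "Zs n k 0 = one_seq n k" by (simp add: Zs_def one_seq_def)
  then show ?case by (simp add: topc_def basis_def)
next
  case (Suc t)
  have IH: "topc (opl n k (concat (map (rowL n k) (rev [1..<t + 1]))) (basis (one_seq n k))) (phi (one_seq n k) + t * (n - k)) (st n k (Suc t) 0)"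
    using Suc st0[of "Suc t" k n] by simp
  have R: "topc (opl n k (rowL n k (Suc t)) (opl n k (concat (map (rowL n k) (rev [1..<t + 1]))) (basis (one_seq n k))))
      (phi (one_seq n k) + t * (n - k) + (n - k)) (st n k (Suc t) (n - k))"
    using row_topc[of "Suc t" k n "n - k", OF _ _ _ _ IH] Suc.prems k by (simp add: rowL_def)
  have L: "concat (map (rowL n k) (rev [1..<Suc t + 1])) = rowL n k (Suc t) @ concat (map (rowL n k) (rev [1..<t + 1]))"
    by simp
  have eqL: "phi (one_seq n k) + t * (n - k) + (n - k) = phi (one_seq n k) + Suc t * (n - k)" by simp
  have sN: "st n k (Suc t) (n - k) = Zs n k (Suc t)" using stN[of "Suc t" k n] Suc.prems by simp
  show ?case using R unfolding L opl_append sN eqL .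
qed

lemma X_low:
  assumes k: "1 \<le> k" "k \<le> n"
  shows "opl n k (XL n k) (basis (one_seq n k)) (lowseq n k) = 1"
proof -
  have "topc (opl n k (XL n k) (basis (one_seq n k))) (phi (one_seq n k) + k * (n - k)) (Zs n k k)"
    using rows_topc[OF k, of k] by (simp add: XL_def)
  moreover have "Zs n k k = lowseq n k" by (simp add: Zs_def lowseq_def)
  ultimately show ?thesis by (simp add: topc_def)
qed

lemma X_Dv:
  assumes k: "1 \<le> k" "k + 1 \<le> n"
  shows "opl n k (XL n k) (basis (one_seq n k)) = Dv n k"
proof -
  have kn: "k \<le> n" using k by simp
  have oneM: "inM n k (basis (one_seq n k))" using one_E[OF kn] by (auto simp: inM_def basis_def)
  have "opl n k (XL n k) (basis (one_seq n k)) = (\<lambda>x. Dv n k x * opl n k (XL n k) (basis (one_seq n k)) (lowseq n k))"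
    by (rule sign_char[OF kn opl_inM[OF oneM]]) (rule X_sign[OF k], auto)
  then show ?thesis using X_low[OF k(1) kn] by simp
qed


lemma hact_hprod: "hact n k (hprod hs) m = foldr (hact n k) hs m"
  by (induct hs arbitrary: m) (simp_all add: hprod_def)

lemma gens_hprod: "gens (hprod hs) = (\<Union>h\<in>set hs. gens h)"
  by (induct hs) (simp_all add: hprod_def)

lemma inYD_rect: "inYD (replicate k N) i j \<longleftrightarrow> 1 \<le> i \<and> i \<le> k \<and> 1 \<le> j \<and> j \<le> N"
  by (auto simp: inYD_def)

lemma rr_rect:
  "1 \<le> i \<Longrightarrow> i \<le> k \<Longrightarrow> 1 \<le> j \<Longrightarrow> j \<le> N \<Longrightarrow> rr (replicate k N) i j = (k - i) + (N - j) + 1"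
proof (induction "(k - i) + (N - j)" arbitrary: i j rule: less_induct)
  case less
  have a: "rr (replicate k N) i (j + 1) = (if j + 1 \<le> N then (k - i) + (N - (j + 1)) + 1 else 0)"
  proof (cases "j + 1 \<le> N")
    case True then show ?thesis using less by simp
  next
    case False then show ?thesis by (subst rr.simps) (simp add: inYD_rect)
  qed
  have b: "rr (replicate k N) (i + 1) j = (if i + 1 \<le> k then (k - (i + 1)) + (N - j) + 1 else 0)"
  proof (cases "i + 1 \<le> k")
    case True then show ?thesis using less by simp
  next
    case False then show ?thesis by (subst rr.simps) (simp add: inYD_rect)
  qed
  have "rr (replicate k N) i j = max (rr (replicate k N) i (j + 1)) (rr (replicate k N) (i + 1) j) + 1"
    using less.prems by (subst rr.simps) (simp add: inYD_rect)
  then show ?case using less.prems unfolding a b by auto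
qed

lemma foldr_opl: "foldr (\<lambda>i u. opl n k (F i) u) is m = opl n k (concat (map F is)) m"
  by (induct "is" arbitrary: m) (simp_all add: opl_append)

lemma Qfac_rect:
  assumes i: "1 \<le> i" "i \<le> k" and kn: "k \<le> n"
  shows "hact n k (Qfac k (replicate k (n - k)) i) m = opl n k (rowL n k i) m"
proof -
  have l: "replicate k (n - k) ! (i - 1) = n - k" using i by simp
  have "hact n k (Qfac k (replicate k (n - k)) i) m
      = foldr (\<lambda>j u. hact n k (HAdd (HT (k + j - i)) (HScal (- (V ^ rr (replicate k (n - k)) i j / qint (rr (replicate k (n - k)) i j))))) u)
          (rev [1..<n - k + 1]) m"
    unfolding Qfac_def hact_hprod l by (simp only: foldr_map o_def)
  also have "\<dots> = foldr (\<lambda>j u. Rf n k (fst (Eb n k i j)) (fq (snd (Eb n k i j))) u) (rev [1..<n - k + 1]) m"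
  proof (rule foldr_cong)
    fix j u assume j: "j \<in> set (rev [1..<n - k + 1])"
    then have r: "rr (replicate k (n - k)) i j = (k - i) + (n - k - j) + 1" using i by (intro rr_rect) auto
    show "hact n k (HAdd (HT (k + j - i)) (HScal (- (V ^ rr (replicate k (n - k)) i j / qint (rr (replicate k (n - k)) i j))))) u
        = Rf n k (fst (Eb n k i j)) (fq (snd (Eb n k i j))) u"
      by (rule ext) (simp add: r Rf_def fq_def Eb_def)
  qed simp_all
  also have "\<dots> = opl n k (rowL n k i) m" by (simp add: opl_def rowL_def foldr_map o_def)
  finally show ?thesis .
qed

lemma Xlam_rect:
  assumes kn: "k \<le> n"
  shows "hact n k (Xlam k (replicate k (n - k))) m = opl n k (XL n k) m"
proof -
  have "hact n k (Xlam k (replicate k (n - k))) m = foldr (\<lambda>i u. hact n k (Qfac k (replicate k (n - k)) i) u) (rev [1..<k + 1]) m"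
    unfolding Xlam_def hact_hprod by (simp only: foldr_map o_def length_replicate)
  also have "\<dots> = foldr (\<lambda>i u. opl n k (rowL n k i) u) (rev [1..<k + 1]) m"
    by (rule foldr_cong) (auto simp: Qfac_rect kn)
  also have "\<dots> = opl n k (XL n k) m" by (simp add: foldr_opl XL_def)
  finally show ?thesis .
qed

lemma Xlam_valid:
  assumes "1 \<le> k" "k + 1 \<le> n"
  shows "valid_h n (Xlam k (replicate k (n - k)))"
  using assms unfolding valid_h_def Xlam_def Qfac_def by (auto simp: gens_hprod)

lemma map_shift: "i \<le> k \<Longrightarrow> map (\<lambda>j. k + j - i) [1..<N + 1] = [k + 1 - i..<k + N + 1 - i]"
  by (induct N) (auto simp: Suc_diff_le)

lemma wword_rect:
  assumes kn: "k \<le> n"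
  shows "wword k (replicate k (n - k)) = map fst (XL n k)"
proof -
  have pw: "Pword k (replicate k (n - k)) i = map fst (rowL n k i)" if i: "i \<in> set (rev [1..<k + 1])" for i
  proof -
    have i': "1 \<le> i" "i \<le> k" using i by auto
    have "map fst (rowL n k i) = rev (map (\<lambda>j. k + j - i) [1..<n - k + 1])"
      by (simp add: rowL_def Eb_def rev_map)
    also have "\<dots> = rev [k + 1 - i..<k + (n - k) + 1 - i]" using map_shift[OF i'(2)] by simp
    finally show ?thesis using i' by (simp add: Pword_def)
  qed
  have mm: "map (Pword k (replicate k (n - k))) (rev [1..<k + 1]) = map (\<lambda>i. map fst (rowL n k i)) (rev [1..<k + 1])"
    by (rule map_cong) (simp_all only: pw)
  show ?thesis unfolding wword_def XL_def length_replicate mm by (simp only: map_concat map_map o_def)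
qed

lemma row_path:
  assumes i: "1 \<le> i" "i \<le> k"
  shows "j \<le> n - k \<Longrightarrow> foldr swp (map fst (map (Eb n k i) (rev [1..<j + 1]))) (st n k i 0) = st n k i j"
proof (induct j)
  case 0 then show ?case by simp
next
  case (Suc j)
  have j: "j + 1 \<le> n - k" using Suc.prems by simp
  let ?xs = "replicate (k - i) True @ replicate j False"
  have g: "fst (Eb n k i (Suc j)) = Suc (length ?xs)" using i by (simp add: Eb_def)
  have "foldr swp (map fst (map (Eb n k i) (rev [1..<Suc j + 1]))) (st n k i 0)
      = swp (Suc (length ?xs)) (st n k i j)" using Suc g by simp
  also have "\<dots> = st n k i (j + 1)" unfolding st_split[OF j] swp_at st_next[OF j] ..
  finally show ?case by simp
qed

lemma rows_path:
  assumes k: "1 \<le> k" "k \<le> n"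
  shows "t \<le> k \<Longrightarrow> foldr swp (map fst (concat (map (rowL n k) (rev [1..<t + 1])))) (one_seq n k) = Zs n k t"
proof (induct t)
  case 0 then show ?case by (simp add: Zs_def one_seq_def)
next
  case (Suc t)
  have IH: "foldr swp (map fst (concat (map (rowL n k) (rev [1..<t + 1])))) (one_seq n k) = st n k (Suc t) 0"
    using Suc st0[of "Suc t" k n] by simp
  have "foldr swp (map fst (concat (map (rowL n k) (rev [1..<Suc t + 1])))) (one_seq n k)
      = foldr swp (map fst (rowL n k (Suc t))) (st n k (Suc t) 0)"
    using IH by simp
  also have "\<dots> = st n k (Suc t) (n - k)"
    using row_path[where i="Suc t" and k=k and n=n and j="n - k"] Suc.prems by (simp add: rowL_def)
  also have "\<dots> = Zs n k (Suc t)" using stN[of "Suc t" k n] Suc.prems by simp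
  finally show ?case .
qed

theorem mainTheorem3:
  fixes n k :: nat
  assumes "1 \<le> k" and "k \<le> n - 1"
  shows "hact n k (Xlam k (replicate k (n - k))) (basis (one_seq n k))
           = CJ n k (act_word (wword k (replicate k (n - k))) (one_seq n k))"
proof -
  have k1: "1 \<le> k" "k + 1 \<le> n" using assms by auto
  have kn: "k \<le> n" and n1: "1 \<le> n" using k1 by auto
  have X: "hact n k (Xlam k (replicate k (n - k))) (basis (one_seq n k)) = Dv n k"
    using Xlam_rect[OF kn] X_Dv[OF k1] by simp
  have bar: "barM n k (Dv n k) = Dv n k"
    using barM_psi[OF n1 kn Xlam_valid[OF k1]] X psi_Dv[OF n1 kn] by simp
  have C: "CJ n k (lowseq n k) = Dv n k" by (rule CJ_Dv[OF n1 kn bar])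
  have A: "act_word (wword k (replicate k (n - k))) (one_seq n k) = lowseq n k"
  proof -
    have "act_word (wword k (replicate k (n - k))) (one_seq n k) = foldr swp (map fst (XL n k)) (one_seq n k)"
      by (simp add: act_word_def wword_rect[OF kn])
    also have "\<dots> = Zs n k k" using rows_path[OF k1(1) kn, of k] by (simp add: XL_def)
    also have "\<dots> = lowseq n k" by (simp add: Zs_def lowseq_def)
    finally show ?thesis .
  qed
  show ?thesis using X C A by simp
qed


end
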